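(* For every $k\ge1$, $$\lim_{N\to\infty}\mathbb{E}[Z_{N,k}^2]=\sum_{(w_1,w_2)}\mathbb{E}\big[\bar T_{w_1}\bar T_{w_2}\big],$$ where the sum runs over a set of representatives of equivalence classes of weak CLT pairs $(w_1,w_2)$ with $w_1,w_2\in\mathcal V_k$ and $\mathrm{wt}((w_1,w_2))=k$. In particular the limit is $0$ when $k$ is even.
   Context: $\{\xi_{ij}\}_{1\le i\le j}$ are independent real random variables; $\{\xi_{ii}\}$ i.i.d. with mean zero and all moments finite; $\{\xi_{ij}\}_{i<j}$ i.i.d. with mean zero, $\mathbb{E}[\xi_{12}^2]=1$, all moments finite; $\xi_e=\xi_{\min(i,j),\max(i,j)}$ for $e=\{i,j\}$ (including $i=j$). A word is a finite sequence $w=(s_1,\dots,s_m)$ of positive integers; $\ell(w)=m$; $N$-word if all letters lie in $\{1,\dots,N\}$; closed if $s_1=s_m$; $\mathrm{supp}(w)$ its letter set; $E_w=\{\{s_i,s_{i+1}\}:1\le i\le m-1\}$ (undirected; self edge $\{u,u\}$); $N_e^w=\#\{i\le m-1:\{s_i,s_{i+1}\}=e\}$. For $a=(w_1,w_2)$: $\mathrm{wt}(a)=\#(\mathrm{supp}(w_1)\cup\mathrm{supp}(w_2))$, $E_a=E_{w_1}\cup E_{w_2}$, $N_e^a=N_e^{w_1}+N_e^{w_2}$; equivalence = a bijection of supports mapping one to the other letter by letter. Weak CLT pair: $N_e^a\ge2$ for all $e\in E_a$ and $E_{w_1}\cap E_{w_2}\ne\emptyset$. $\mathcal V_k$ = closed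 words of length $k+1$ with first letter $1$ having at least one self edge; $\mathcal V_k^{(N)}$ its $N$-words. $T_w=\prod_{e\in E_w}\xi_e^{N_e^w}$, $\bar T_w=T_w-\mathbb{E}T_w$, $Z_{N,k}=N^{-(k-1)/2}\sum_{w\in\mathcal V_k^{(N)}}\bar T_w$. *)

theory Defs
  imports "HOL-Probability.Probability"
begin

text \<open>An undirected edge \<open>{a,b}\<close> is represented by the normalized pair \<open>(min a b, max a b)\<close>;
  a self edge is a pair \<open>(u,u)\<close>.\<close>

definition mk_edge :: "nat \<Rightarrow> nat \<Rightarrow> nat \<times> nat" where
  "mk_edge a b = (min a b, max a b)"

definition word_edges :: "nat list \<Rightarrow> (nat \<times> nat) set" where
  "word_edges w = {mk_edge (w ! i) (w ! Suc i) | i. Suc i < length w}"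

definition edge_count :: "nat list \<Rightarrow> nat \<times> nat \<Rightarrow> nat" where
  "edge_count w e = card {i. Suc i < length w \<and> mk_edge (w ! i) (w ! Suc i) = e}"

definition closed_word :: "nat list \<Rightarrow> bool" where
  "closed_word w \<longleftrightarrow> w \<noteq> [] \<and> hd w = last w"

definition V_words :: "nat \<Rightarrow> nat list set" where
  "V_words k = {w. length w = k + 1 \<and> closed_word w \<and> hd w = 1 \<and> (\<forall>a\<in>set w. 1 \<le> a)
                  \<and> (\<exists>e\<in>word_edges w. fst e = snd e)}"

definition V_words_N :: "nat \<Rightarrow> nat \<Rightarrow> nat list set" where
  "V_words_N N k = {w \<in> V_words k. set w \<subseteq> {1..N}}"

text \<open>\<open>\<xi> i j\<close> for \<open>i \<le> j\<close> is the entry variable; \<open>\<xi>_e\<close> for a normalized edge e = (i,j) is \<open>\<xi> i j\<close>.\<close>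
definition T_word :: "(nat \<Rightarrow> nat \<Rightarrow> 'a \<Rightarrow> real) \<Rightarrow> nat list \<Rightarrow> 'a \<Rightarrow> real" where
  "T_word \<xi> w x = (\<Prod>e\<in>word_edges w. \<xi> (fst e) (snd e) x ^ edge_count w e)"

definition Tbar_word :: "'a measure \<Rightarrow> (nat \<Rightarrow> nat \<Rightarrow> 'a \<Rightarrow> real) \<Rightarrow> nat list \<Rightarrow> 'a \<Rightarrow> real" where
  "Tbar_word M \<xi> w x = T_word \<xi> w x - integral\<^sup>L M (T_word \<xi> w)"

definition Z_var :: "'a measure \<Rightarrow> (nat \<Rightarrow> nat \<Rightarrow> 'a \<Rightarrow> real) \<Rightarrow> nat \<Rightarrow> nat \<Rightarrow> 'a \<Rightarrow> real" where
  "Z_var M \<xi> N k x = real N powr (- (real k - 1) / 2) * (\<Sum>w\<in>V_words_N N k. Tbar_word M \<xi> w x)"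

definition pair_wt :: "nat list \<times> nat list \<Rightarrow> nat" where
  "pair_wt a = card (set (fst a) \<union> set (snd a))"

definition pair_edges :: "nat list \<times> nat list \<Rightarrow> (nat \<times> nat) set" where
  "pair_edges a = word_edges (fst a) \<union> word_edges (snd a)"

definition pair_count :: "nat list \<times> nat list \<Rightarrow> nat \<times> nat \<Rightarrow> nat" where
  "pair_count a e = edge_count (fst a) e + edge_count (snd a) e"

definition weak_CLT_pair :: "nat list \<times> nat list \<Rightarrow> bool" where
  "weak_CLT_pair a \<longleftrightarrow> (\<forall>e\<in>pair_edges a. pair_count a e \<ge> 2)
      \<and> word_edges (fst a) \<inter> word_edges (snd a) \<noteq> {}"

definition pair_equiv :: "nat list \<times> nat list \<Rightarrow> nat list \<times> nat list \<Rightarrow> bool" where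
  "pair_equiv a b \<longleftrightarrow> (\<exists>\<phi>. bij_betw \<phi> (set (fst a) \<union> set (snd a)) (set (fst b) \<union> set (snd b))
      \<and> map \<phi> (fst a) = fst b \<and> map \<phi> (snd a) = snd b)"

definition CLT_pairs :: "nat \<Rightarrow> (nat list \<times> nat list) set" where
  "CLT_pairs k = {a. fst a \<in> V_words k \<and> snd a \<in> V_words k \<and> weak_CLT_pair a \<and> pair_wt a = k}"

definition CLT_pair_rel :: "nat \<Rightarrow> ((nat list \<times> nat list) \<times> (nat list \<times> nat list)) set" where
  "CLT_pair_rel k = {(a, b). a \<in> CLT_pairs k \<and> b \<in> CLT_pairs k \<and> pair_equiv a b}"

definition limit_sum :: "'a measure \<Rightarrow> (nat \<Rightarrow> nat \<Rightarrow> 'a \<Rightarrow> real) \<Rightarrow> nat \<Rightarrow> real" where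
  "limit_sum M \<xi> k = (\<Sum>C\<in>CLT_pairs k // CLT_pair_rel k.
      (let a = (SOME a. a \<in> C) in
        integral\<^sup>L M (\<lambda>x. Tbar_word M \<xi> (fst a) x * Tbar_word M \<xi> (snd a) x)))"

end

theory Submission
  imports Defs
begin


definition emap :: "(nat \<Rightarrow> nat) \<Rightarrow> nat \<times> nat \<Rightarrow> nat \<times> nat" where
  "emap \<phi> e = mk_edge (\<phi> (fst e)) (\<phi> (snd e))"

lemma mk_edge_sym: "mk_edge a b = mk_edge b a" by (auto simp: mk_edge_def)

lemma mk_edge_fst_snd[simp]: "fst (mk_edge a b) = min a b" "snd (mk_edge a b) = max a b"
  by (auto simp: mk_edge_def)

lemma emap_mk: "emap \<phi> (mk_edge a b) = mk_edge (\<phi> a) (\<phi> b)"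
  by (cases "a \<le> b") (auto simp: emap_def mk_edge_def min_def max_def)

lemma mk_edge_eq: "mk_edge a b = mk_edge c d \<longleftrightarrow> (a = c \<and> b = d) \<or> (a = d \<and> b = c)"
  by (auto simp: mk_edge_def min_def max_def)

lemma mk_edge_self: "fst (mk_edge a b) = snd (mk_edge a b) \<longleftrightarrow> a = b"
  by auto

lemma word_edges_alt: "word_edges w = (\<lambda>i. mk_edge (w!i) (w!Suc i)) ` {i. Suc i < length w}"
  by (auto simp: word_edges_def)

lemma finite_idx0[simp]: "finite {i. Suc i < length w}"
  by (rule finite_subset[of _ "{..<length w}"]) auto

lemma finite_word_edges[simp]: "finite (word_edges w)"
  unfolding word_edges_alt by simp

lemma edge_in_set: "e \<in> word_edges w \<Longrightarrow> fst e \<in> set w \<and> snd e \<in> set w"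
  by (auto simp: word_edges_def min_def max_def)

lemma edge_form: "e \<in> word_edges w \<Longrightarrow> e = mk_edge (fst e) (snd e)"
  by (auto simp: word_edges_def mk_edge_def)

lemma finite_idx[simp]: "finite {i. Suc i < length w \<and> P i}"
  by (rule finite_subset[of _ "{..<length w}"]) auto

lemma edge_count_pos: "e \<in> word_edges w \<Longrightarrow> edge_count w e \<ge> 1"
  unfolding edge_count_def word_edges_def
  by (auto simp: Suc_le_eq card_gt_0_iff)

lemma edge_count_zero: "e \<notin> word_edges w \<Longrightarrow> edge_count w e = 0"
  unfolding edge_count_def word_edges_def by auto

lemma sum_edge_count: "(\<Sum>e\<in>word_edges w. edge_count w e) = length w - 1"
proof -
  have "(\<Sum>e\<in>word_edges w. edge_count w e)
      = (\<Sum>e\<in>word_edges w. \<Sum>i\<in>{i. i \<in> {i. Suc i < length w} \<and> mk_edge (w!i) (w!Suc i) = e}. (1::nat))"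
    unfolding edge_count_def by simp
  also have "\<dots> = (\<Sum>i\<in>{i. Suc i < length w}. 1)"
    by (rule sum.group) (auto simp: word_edges_alt)
  also have "\<dots> = length w - 1"
  proof -
    have "{i. Suc i < length w} = {..<length w - 1}" by auto
    thus ?thesis by simp
  qed
  finally show ?thesis .
qed

lemma word_edges_map: "word_edges (map \<phi> w) = emap \<phi> ` word_edges w"
  unfolding word_edges_alt by (auto simp: emap_mk image_image)

lemma emap_inj:
  assumes "inj_on \<phi> D" "fst e \<in> D" "snd e \<in> D" "fst e' \<in> D" "snd e' \<in> D"
    "e = mk_edge (fst e) (snd e)" "e' = mk_edge (fst e') (snd e')" "emap \<phi> e = emap \<phi> e'"
  shows "e = e'"
proof -
  have "mk_edge (\<phi> (fst e)) (\<phi> (snd e)) = mk_edge (\<phi> (fst e')) (\<phi> (snd e'))"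
    using assms(8) by (simp add: emap_def)
  hence "(\<phi> (fst e) = \<phi> (fst e') \<and> \<phi> (snd e) = \<phi> (snd e')) \<or> (\<phi> (fst e) = \<phi> (snd e') \<and> \<phi> (snd e) = \<phi> (fst e'))"
    by (simp add: mk_edge_eq)
  hence "(fst e = fst e' \<and> snd e = snd e') \<or> (fst e = snd e' \<and> snd e = fst e')"
    using assms(1-5) by (auto dest: inj_onD)
  thus ?thesis using assms(6,7) by (metis mk_edge_sym)
qed

lemma emap_self:
  assumes "inj_on \<phi> D" "fst e \<in> D" "snd e \<in> D"
  shows "fst (emap \<phi> e) = snd (emap \<phi> e) \<longleftrightarrow> fst e = snd e"
  using assms by (auto simp: emap_def min_def max_def split: if_splits dest: inj_onD)

lemma edge_count_map:
  assumes "inj_on \<phi> D" "set w \<subseteq> D" "fst e \<in> D" "snd e \<in> D" "e = mk_edge (fst e) (snd e)"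
  shows "edge_count (map \<phi> w) (emap \<phi> e) = edge_count w e"
proof -
  have "{i. Suc i < length (map \<phi> w) \<and> mk_edge (map \<phi> w ! i) (map \<phi> w ! Suc i) = emap \<phi> e}
      = {i. Suc i < length w \<and> mk_edge (w ! i) (w ! Suc i) = e}"
  proof (intro Collect_cong conj_cong refl)
    fix i assume i: "Suc i < length w"
    have a: "w ! i \<in> D" "w ! Suc i \<in> D" using i assms(2) by (auto intro!: nth_mem)
    have "mk_edge (map \<phi> w ! i) (map \<phi> w ! Suc i) = emap \<phi> (mk_edge (w!i) (w!Suc i))"
      using i by (simp add: emap_mk)
    moreover have "emap \<phi> (mk_edge (w!i) (w!Suc i)) = emap \<phi> e \<longleftrightarrow> mk_edge (w!i) (w!Suc i) = e"
    proof
      assume h: "emap \<phi> (mk_edge (w!i) (w!Suc i)) = emap \<phi> e"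
      show "mk_edge (w!i) (w!Suc i) = e"
        by (rule emap_inj[OF assms(1) _ _ assms(3,4) _ assms(5) h])
           (use a in \<open>auto simp: mk_edge_def min_def max_def\<close>)
    qed simp
    ultimately show "(mk_edge (map \<phi> w ! i) (map \<phi> w ! Suc i) = emap \<phi> e) = (mk_edge (w ! i) (w ! Suc i) = e)"
      by simp
  qed simp
  thus ?thesis by (simp add: edge_count_def)
qed


definition mapp :: "(nat \<Rightarrow> nat) \<Rightarrow> nat list \<times> nat list \<Rightarrow> nat list \<times> nat list" where
  "mapp \<phi> a = (map \<phi> (fst a), map \<phi> (snd a))"

definition supp :: "nat list \<times> nat list \<Rightarrow> nat set" where
  "supp a = set (fst a) \<union> set (snd a)"

definition Gf :: "(nat \<times> nat \<Rightarrow> nat \<Rightarrow> real) \<Rightarrow> nat list \<times> nat list \<Rightarrow> real" where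
  "Gf \<mu> a = (\<Prod>e\<in>pair_edges a. \<mu> e (pair_count a e))
      - (\<Prod>e\<in>word_edges (fst a). \<mu> e (edge_count (fst a) e))
      * (\<Prod>e\<in>word_edges (snd a). \<mu> e (edge_count (snd a) e))"

definition self_inv :: "(nat \<times> nat \<Rightarrow> nat \<Rightarrow> real) \<Rightarrow> bool" where
  "self_inv \<mu> \<longleftrightarrow> (\<forall>e e' n. (fst e = snd e \<longleftrightarrow> fst e' = snd e') \<longrightarrow> \<mu> e n = \<mu> e' n)"

lemma emap_inj_on:
  assumes "inj_on \<phi> D" "set w \<subseteq> D" "set v \<subseteq> D"
  shows "inj_on (emap \<phi>) (word_edges w \<union> word_edges v)"
proof (rule inj_onI)
  fix e e' assume e: "e \<in> word_edges w \<union> word_edges v" and e': "e' \<in> word_edges w \<union> word_edges v"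
    and h: "emap \<phi> e = emap \<phi> e'"
  show "e = e'"
    using e e' assms edge_in_set[of e w] edge_in_set[of e v] edge_in_set[of e' w] edge_in_set[of e' v]
      edge_form[of e w] edge_form[of e v] edge_form[of e' w] edge_form[of e' v]
    by (intro emap_inj[OF assms(1) _ _ _ _ _ _ h]) auto
qed

lemma prod_word_map:
  assumes "inj_on \<phi> D" "set w \<subseteq> D" "self_inv \<mu>"
  shows "(\<Prod>e\<in>word_edges (map \<phi> w). \<mu> e (edge_count (map \<phi> w) e))
       = (\<Prod>e\<in>word_edges w. \<mu> e (edge_count w e))"
proof -
  have inj: "inj_on (emap \<phi>) (word_edges w)" using emap_inj_on[OF assms(1,2,2)] by simp
  have "(\<Prod>e\<in>word_edges (map \<phi> w). \<mu> e (edge_count (map \<phi> w) e))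
      = (\<Prod>e\<in>word_edges w. \<mu> (emap \<phi> e) (edge_count (map \<phi> w) (emap \<phi> e)))"
    unfolding word_edges_map by (rule prod.reindex[OF inj, unfolded comp_def])
  also have "\<dots> = (\<Prod>e\<in>word_edges w. \<mu> e (edge_count w e))"
  proof (rule prod.cong[OF refl])
    fix e assume e: "e \<in> word_edges w"
    have c: "fst e \<in> D" "snd e \<in> D" using edge_in_set[OF e] assms(2) by auto
    have "\<mu> (emap \<phi> e) n = \<mu> e n" for n
      using assms(3) emap_self[OF assms(1) c] unfolding self_inv_def by blast
    thus "\<mu> (emap \<phi> e) (edge_count (map \<phi> w) (emap \<phi> e)) = \<mu> e (edge_count w e)"
      using edge_count_map[OF assms(1,2) c edge_form[OF e]] by simp
  qed
  finally show ?thesis .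
qed

lemma pair_edges_mapp: "pair_edges (mapp \<phi> a) = emap \<phi> ` pair_edges a"
  by (auto simp: pair_edges_def mapp_def word_edges_map)

lemma pair_count_mapp:
  assumes "inj_on \<phi> (supp a)" "e \<in> pair_edges a"
  shows "pair_count (mapp \<phi> a) (emap \<phi> e) = pair_count a e"
proof -
  have c: "fst e \<in> supp a" "snd e \<in> supp a" "e = mk_edge (fst e) (snd e)"
    using assms(2) edge_in_set[of e "fst a"] edge_in_set[of e "snd a"]
      edge_form[of e "fst a"] edge_form[of e "snd a"]
    by (auto simp: pair_edges_def supp_def)
  show ?thesis unfolding pair_count_def mapp_def
    using edge_count_map[OF assms(1) _ c, of "fst a"] edge_count_map[OF assms(1) _ c, of "snd a"]
    by (simp add: supp_def)
qed

lemma inj_pair_edges: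
  assumes "inj_on \<phi> (supp a)"
  shows "inj_on (emap \<phi>) (pair_edges a)"
  unfolding pair_edges_def using emap_inj_on[OF assms] by (auto simp: supp_def)

lemma Gf_mapp:
  assumes "inj_on \<phi> (supp a)" "self_inv \<mu>"
  shows "Gf \<mu> (mapp \<phi> a) = Gf \<mu> a"
proof -
  have p1: "(\<Prod>e\<in>pair_edges (mapp \<phi> a). \<mu> e (pair_count (mapp \<phi> a) e))
      = (\<Prod>e\<in>pair_edges a. \<mu> e (pair_count a e))"
  proof -
    have "(\<Prod>e\<in>pair_edges (mapp \<phi> a). \<mu> e (pair_count (mapp \<phi> a) e))
      = (\<Prod>e\<in>pair_edges a. \<mu> (emap \<phi> e) (pair_count (mapp \<phi> a) (emap \<phi> e)))"
      unfolding pair_edges_mapp by (rule prod.reindex[OF inj_pair_edges[OF assms(1)], unfolded comp_def])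
    also have "\<dots> = (\<Prod>e\<in>pair_edges a. \<mu> e (pair_count a e))"
    proof (rule prod.cong[OF refl])
      fix e assume e: "e \<in> pair_edges a"
      have c: "fst e \<in> supp a" "snd e \<in> supp a"
        using e edge_in_set[of e "fst a"] edge_in_set[of e "snd a"]
        by (auto simp: pair_edges_def supp_def)
      have "\<mu> (emap \<phi> e) n = \<mu> e n" for n
        using assms(2) emap_self[OF assms(1) c] unfolding self_inv_def by blast
      thus "\<mu> (emap \<phi> e) (pair_count (mapp \<phi> a) (emap \<phi> e)) = \<mu> e (pair_count a e)"
        using pair_count_mapp[OF assms(1) e] by simp
    qed
    finally show ?thesis .
  qed
  show ?thesis unfolding Gf_def p1
    using prod_word_map[OF assms(1) _ assms(2), of "fst a"] prod_word_map[OF assms(1) _ assms(2), of "snd a"]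
    by (simp add: mapp_def supp_def)
qed

lemma weak_mapp:
  assumes "inj_on \<phi> (supp a)"
  shows "weak_CLT_pair (mapp \<phi> a) \<longleftrightarrow> weak_CLT_pair a"
proof -
  have "(\<forall>e\<in>pair_edges (mapp \<phi> a). pair_count (mapp \<phi> a) e \<ge> 2) \<longleftrightarrow> (\<forall>e\<in>pair_edges a. pair_count a e \<ge> 2)"
    unfolding pair_edges_mapp using pair_count_mapp[OF assms] by auto
  moreover have "word_edges (fst (mapp \<phi> a)) \<inter> word_edges (snd (mapp \<phi> a))
      = emap \<phi> ` (word_edges (fst a) \<inter> word_edges (snd a))"
    unfolding mapp_def fst_conv snd_conv word_edges_map
    by (rule inj_on_image_Int[symmetric, of _ "pair_edges a"], rule inj_pair_edges[OF assms])
       (auto simp: pair_edges_def)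
  ultimately show ?thesis unfolding weak_CLT_pair_def by auto
qed

lemma supp_mapp: "supp (mapp \<phi> a) = \<phi> ` supp a"
  by (auto simp: supp_def mapp_def)

lemma pair_wt_supp: "pair_wt a = card (supp a)"
  by (simp add: pair_wt_def supp_def)

lemma wt_mapp:
  assumes "inj_on \<phi> (supp a)"
  shows "pair_wt (mapp \<phi> a) = pair_wt a"
  unfolding pair_wt_supp supp_mapp using card_image[OF assms] .


lemma Gf_zero:
  assumes mu1: "\<And>e. \<mu> e 1 = 0" and nw: "\<not> weak_CLT_pair a"
  shows "Gf \<mu> a = 0"
proof (cases "\<exists>e\<in>pair_edges a. pair_count a e < 2")
  case True
  then obtain e where e: "e \<in> pair_edges a" "pair_count a e < 2" by blast
  have fin: "finite (pair_edges a)" by (simp add: pair_edges_def)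
  have p1: "(\<Prod>e\<in>pair_edges a. \<mu> e (pair_count a e)) = 0"
  proof (rule prod_zero[OF fin], rule bexI[OF _ e(1)])
    have "pair_count a e \<ge> 1" using e(1) edge_count_pos[of e "fst a"] edge_count_pos[of e "snd a"]
      by (auto simp: pair_edges_def pair_count_def)
    hence "pair_count a e = 1" using e(2) by simp
    thus "\<mu> e (pair_count a e) = 0" using mu1 by simp
  qed
  have "(\<Prod>e\<in>word_edges (fst a). \<mu> e (edge_count (fst a) e))
      * (\<Prod>e\<in>word_edges (snd a). \<mu> e (edge_count (snd a) e)) = 0"
  proof (cases "e \<in> word_edges (fst a)")
    case True
    have "edge_count (fst a) e = 1" using edge_count_pos[OF True] e(2) by (simp add: pair_count_def)
    hence "(\<Prod>e\<in>word_edges (fst a). \<mu> e (edge_count (fst a) e)) = 0"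
      using mu1 by (intro prod_zero finite_word_edges bexI[OF _ True]) simp
    thus ?thesis by simp
  next
    case False
    hence ev: "e \<in> word_edges (snd a)" using e(1) by (simp add: pair_edges_def)
    have "edge_count (snd a) e = 1" using edge_count_pos[OF ev] e(2) by (simp add: pair_count_def)
    hence "(\<Prod>e\<in>word_edges (snd a). \<mu> e (edge_count (snd a) e)) = 0"
      using mu1 by (intro prod_zero finite_word_edges bexI[OF _ ev]) simp
    thus ?thesis by simp
  qed
  thus ?thesis unfolding Gf_def p1 by simp
next
  case False
  hence dis: "word_edges (fst a) \<inter> word_edges (snd a) = {}" using nw
    by (auto simp: weak_CLT_pair_def not_less)
  have "(\<Prod>e\<in>pair_edges a. \<mu> e (pair_count a e))
     = (\<Prod>e\<in>word_edges (fst a). \<mu> e (pair_count a e)) * (\<Prod>e\<in>word_edges (snd a). \<mu> e (pair_count a e))"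
    unfolding pair_edges_def by (rule prod.union_disjoint) (auto simp: dis)
  also have "(\<Prod>e\<in>word_edges (fst a). \<mu> e (pair_count a e)) = (\<Prod>e\<in>word_edges (fst a). \<mu> e (edge_count (fst a) e))"
  proof (rule prod.cong[OF refl])
    fix e assume "e \<in> word_edges (fst a)"
    hence "e \<notin> word_edges (snd a)" using dis by blast
    thus "\<mu> e (pair_count a e) = \<mu> e (edge_count (fst a) e)" by (simp add: pair_count_def edge_count_zero)
  qed
  also have "(\<Prod>e\<in>word_edges (snd a). \<mu> e (pair_count a e)) = (\<Prod>e\<in>word_edges (snd a). \<mu> e (edge_count (snd a) e))"
  proof (rule prod.cong[OF refl])
    fix e assume "e \<in> word_edges (snd a)"
    hence "e \<notin> word_edges (fst a)" using dis by blast
    thus "\<mu> e (pair_count a e) = \<mu> e (edge_count (snd a) e)" by (simp add: pair_count_def edge_count_zero)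
  qed
  finally show ?thesis unfolding Gf_def by simp
qed

lemma sum_pair_count:
  "(\<Sum>e\<in>pair_edges a. pair_count a e) = (length (fst a) - 1) + (length (snd a) - 1)"
proof -
  have "(\<Sum>e\<in>pair_edges a. edge_count (fst a) e) = (\<Sum>e\<in>word_edges (fst a). edge_count (fst a) e)"
    unfolding pair_edges_def by (rule sum.mono_neutral_right) (auto simp: edge_count_zero)
  moreover have "(\<Sum>e\<in>pair_edges a. edge_count (snd a) e) = (\<Sum>e\<in>word_edges (snd a). edge_count (snd a) e)"
    unfolding pair_edges_def by (rule sum.mono_neutral_right) (auto simp: edge_count_zero)
  ultimately show ?thesis by (simp add: pair_count_def sum.distrib sum_edge_count)
qed


definition NS :: "nat list \<Rightarrow> (nat \<times> nat) set" where
  "NS w = {e \<in> word_edges w. fst e \<noteq> snd e}"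

lemma word_edges_snoc:
  assumes "xs \<noteq> []"
  shows "word_edges (xs @ [x]) = insert (mk_edge (last xs) x) (word_edges xs)"
proof -
  have idx: "{i. Suc i < length (xs @ [x])} = insert (length xs - 1) {i. Suc i < length xs}"
    using assms by (cases xs) auto
  have a: "(xs @ [x]) ! (length xs - 1) = last xs" "(xs @ [x]) ! Suc (length xs - 1) = x"
    using assms by (auto simp: nth_append last_conv_nth)
  have b: "\<And>i. Suc i < length xs \<Longrightarrow> (xs @ [x]) ! i = xs ! i \<and> (xs @ [x]) ! Suc i = xs ! Suc i"
    by (auto simp: nth_append)
  show ?thesis unfolding word_edges_alt idx using a b by (auto simp: image_iff)
qed

lemma finite_NS[simp]: "finite (NS w)" by (simp add: NS_def)

lemma NS_sub: "e \<in> NS w \<Longrightarrow> fst e \<in> set w \<and> snd e \<in> set w"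
  by (auto simp: NS_def dest: edge_in_set)

lemma NS_snoc:
  assumes "xs \<noteq> []"
  shows "NS (xs @ [x]) = NS xs \<union> (if last xs \<noteq> x then {mk_edge (last xs) x} else {})"
  using assms unfolding NS_def word_edges_snoc[OF assms] by (auto simp: min_def max_def split: if_splits)

lemma NS_single: "NS [x] = {}"
  by (simp add: NS_def word_edges_def)

lemma grow:
  assumes "finite A" "finite F" "w \<noteq> []" "hd w \<in> A" "\<forall>e\<in>F. fst e \<in> A \<and> snd e \<in> A"
  shows "card (A \<union> set w) + card F \<le> card A + card (F \<union> NS w) \<and>
    (card (A \<union> set w) + card F = card A + card (F \<union> NS w) \<longrightarrow>
      (\<forall>c::nat\<Rightarrow>bool. (\<forall>e\<in>F. c (fst e) \<noteq> c (snd e)) \<longrightarrow>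
        (\<exists>c'. (\<forall>x\<in>A. c' x = c x) \<and> (\<forall>e\<in>F \<union> NS w. c' (fst e) \<noteq> c' (snd e)))))"
  using assms(3,4)
proof (induction w rule: rev_induct)
  case Nil
  then show ?case by simp
next
  case (snoc x xs)
  show ?case
  proof (cases "xs = []")
    case True
    hence "x \<in> A" using snoc.prems by simp
    hence "A \<union> set (xs @ [x]) = A" using True by auto
    thus ?thesis using True NS_single[of x] by auto
  next
    case ne: False
    have hd: "hd xs \<in> A" using snoc.prems ne by simp
    note IH = snoc.IH[OF ne hd]
    define l where "l = last xs"
    have l: "l \<in> set xs" using ne by (simp add: l_def)
    have fin: "finite (F \<union> NS xs)" using assms(2) by simp
    show ?thesis
    proof (cases "x \<in> A \<union> set xs")
      case True
      have s: "A \<union> set (xs @ [x]) = A \<union> set xs" using True by auto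
      have sub: "F \<union> NS xs \<subseteq> F \<union> NS (xs @ [x])" using NS_snoc[OF ne] by auto
      have c: "card (F \<union> NS xs) \<le> card (F \<union> NS (xs @ [x]))"
        by (rule card_mono) (use assms(2) sub in auto)
      show ?thesis
      proof (intro conjI impI allI)
        show "card (A \<union> set (xs @ [x])) + card F \<le> card A + card (F \<union> NS (xs @ [x]))"
          unfolding s using conjunct1[OF IH] c by linarith
      next
        fix col :: "nat \<Rightarrow> bool" assume eq: "card (A \<union> set (xs @ [x])) + card F = card A + card (F \<union> NS (xs @ [x]))"
          and pc: "\<forall>e\<in>F. col (fst e) \<noteq> col (snd e)"
        have ceq: "card (F \<union> NS xs) = card (F \<union> NS (xs @ [x]))" using conjunct1[OF IH] c eq[unfolded s] by linarith
        have seq: "F \<union> NS xs = F \<union> NS (xs @ [x])"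
          by (rule card_subset_eq) (use sub ceq assms(2) in auto)
        have "card (A \<union> set xs) + card F = card A + card (F \<union> NS xs)" using eq[unfolded s] ceq by linarith
        hence "\<exists>c'. (\<forall>x\<in>A. c' x = col x) \<and> (\<forall>e\<in>F \<union> NS xs. c' (fst e) \<noteq> c' (snd e))"
          using conjunct2[OF IH] pc by blast
        thus "\<exists>c'. (\<forall>x\<in>A. c' x = col x) \<and> (\<forall>e\<in>F \<union> NS (xs @ [x]). c' (fst e) \<noteq> c' (snd e))"
          unfolding seq .
      qed
    next
      case False
      have lx: "l \<noteq> x" using l False by auto
      have s: "A \<union> set (xs @ [x]) = insert x (A \<union> set xs)" by auto
      have nsx: "F \<union> NS (xs @ [x]) = insert (mk_edge l x) (F \<union> NS xs)"
        using NS_snoc[OF ne] lx by (auto simp: l_def)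
      have notin: "mk_edge l x \<notin> F \<union> NS xs"
      proof
        assume h: "mk_edge l x \<in> F \<union> NS xs"
        have "x \<in> {fst (mk_edge l x), snd (mk_edge l x)}" by (auto simp: min_def max_def)
        moreover have "fst (mk_edge l x) \<in> A \<union> set xs" "snd (mk_edge l x) \<in> A \<union> set xs"
          using h assms(5) NS_sub[of "mk_edge l x" xs] by auto
        ultimately show False using False by auto
      qed
      have c1: "card (A \<union> set (xs @ [x])) = Suc (card (A \<union> set xs))"
        unfolding s using False assms(1) by simp
      have c2: "card (F \<union> NS (xs @ [x])) = Suc (card (F \<union> NS xs))"
        unfolding nsx using notin fin by simp
      show ?thesis
      proof (intro conjI impI allI)
        show "card (A \<union> set (xs @ [x])) + card F \<le> card A + card (F \<union> NS (xs @ [x]))"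
          using conjunct1[OF IH] c1 c2 by linarith
      next
        fix col :: "nat \<Rightarrow> bool" assume eq: "card (A \<union> set (xs @ [x])) + card F = card A + card (F \<union> NS (xs @ [x]))"
          and pc: "\<forall>e\<in>F. col (fst e) \<noteq> col (snd e)"
        have "card (A \<union> set xs) + card F = card A + card (F \<union> NS xs)" using eq c1 c2 by linarith
        with conjunct2[OF IH] pc obtain c' :: "nat \<Rightarrow> bool" where c': "\<forall>y\<in>A. c' y = col y" "\<forall>e\<in>F \<union> NS xs. c' (fst e) \<noteq> c' (snd e)"
          by blast
        define c'' where "c'' = c'(x := \<not> c' l)"
        have "\<forall>y\<in>A. c'' y = col y" using c'(1) False by (auto simp: c''_def)
        moreover have "\<forall>e\<in>F \<union> NS (xs @ [x]). c'' (fst e) \<noteq> c'' (snd e)"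
        proof
          fix e assume e: "e \<in> F \<union> NS (xs @ [x])"
          show "c'' (fst e) \<noteq> c'' (snd e)"
          proof (cases "e = mk_edge l x")
            case True
            thus ?thesis using lx by (auto simp: c''_def min_def max_def)
          next
            case ne2: False
            hence e2: "e \<in> F \<union> NS xs" using e nsx by auto
            have "fst e \<in> A \<union> set xs" "snd e \<in> A \<union> set xs"
              using e2 assms(5) NS_sub[of e xs] by auto
            hence "fst e \<noteq> x" "snd e \<noteq> x" using False by auto
            thus ?thesis using c'(2) e2 by (simp add: c''_def)
          qed
        qed
        ultimately show "\<exists>c'. (\<forall>x\<in>A. c' x = col x) \<and> (\<forall>e\<in>F \<union> NS (xs @ [x]). c' (fst e) \<noteq> c' (snd e))"
          by blast
      qed
    qed
  qed
qed


definition nsteps :: "nat list \<Rightarrow> nat set" where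
  "nsteps w = {i. Suc i < length w \<and> w ! i \<noteq> w ! Suc i}"

lemma parity:
  assumes "w \<noteq> []" "\<forall>e\<in>NS w. c (fst e) \<noteq> c (snd e)"
  shows "c (last w) = (if even (card (nsteps w)) then c (hd w) else \<not> c (hd w))"
  using assms
proof (induction w rule: rev_induct)
  case Nil thus ?case by simp
next
  case (snoc x xs)
  show ?case
  proof (cases "xs = []")
    case True thus ?thesis by (simp add: nsteps_def)
  next
    case ne: False
    have sub: "NS xs \<subseteq> NS (xs @ [x])" using NS_snoc[OF ne] by auto
    have IH: "c (last xs) = (if even (card (nsteps xs)) then c (hd xs) else \<not> c (hd xs))"
      using snoc.IH[OF ne] snoc.prems(2) sub by blast
    have hd: "hd (xs @ [x]) = hd xs" using ne by simp
    have st: "nsteps (xs @ [x]) = nsteps xs \<union> (if last xs \<noteq> x then {length xs - 1} else {})"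
    proof (rule set_eqI)
      fix i
      show "i \<in> nsteps (xs @ [x]) \<longleftrightarrow> i \<in> nsteps xs \<union> (if last xs \<noteq> x then {length xs - 1} else {})"
      proof (cases "Suc i < length xs")
        case True
        have "(xs @ [x]) ! i = xs ! i" "(xs @ [x]) ! Suc i = xs ! Suc i" using True by (auto simp: nth_append)
        moreover have "i \<noteq> length xs - 1" using True by simp
        ultimately show ?thesis using True by (simp add: nsteps_def)
      next
        case False
        show ?thesis
        proof (cases "i = length xs - 1")
          case True
          have "(xs @ [x]) ! i = last xs" "(xs @ [x]) ! Suc i = x"
            using ne True by (auto simp: nth_append last_conv_nth)
          moreover have "Suc i < length (xs @ [x])" using ne True by (cases xs) auto
          ultimately show ?thesis using False True by (simp add: nsteps_def)
        next
          case F2: False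
          have "\<not> Suc i < length (xs @ [x])" using False F2 by auto
          thus ?thesis using False F2 by (simp add: nsteps_def)
        qed
      qed
    qed
    show ?thesis
    proof (cases "last xs = x")
      case True
      thus ?thesis using IH st hd by simp
    next
      case False
      have nin: "length xs - 1 \<notin> nsteps xs" by (auto simp: nsteps_def)
      have fin: "finite (nsteps xs)" by (simp add: nsteps_def)
      have cst: "card (nsteps (xs @ [x])) = Suc (card (nsteps xs))"
        using st False nin fin by simp
      have "mk_edge (last xs) x \<in> NS (xs @ [x])" using NS_snoc[OF ne] False by auto
      hence "c (last xs) \<noteq> c x" using snoc.prems(2) by (auto simp: min_def max_def split: if_splits)
      thus ?thesis using IH cst hd by auto
    qed
  qed
qed

lemma V_basic:
  assumes "w \<in> V_words k"
  shows "w \<noteq> []" "hd w = 1" "last w = 1" "length w = k + 1" "\<exists>s\<in>word_edges w. fst s = snd s"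
  using assms by (auto simp: V_words_def closed_word_def)

lemma wt_bound:
  assumes u: "fst a \<in> V_words k" and v: "snd a \<in> V_words k" and wk: "weak_CLT_pair a"
  shows "pair_wt a \<le> k" and "pair_wt a = k \<Longrightarrow> odd k"
proof -
  define U where "U = fst a"
  define V where "V = snd a"
  note Ub = V_basic[OF u, folded U_def] and Vb = V_basic[OF v, folded V_def]
  have G1: "card ({1} \<union> set U) + card ({}::(nat\<times>nat) set) \<le> card {1::nat} + card ({} \<union> NS U) \<and>
    (card ({1} \<union> set U) + card ({}::(nat\<times>nat) set) = card {1::nat} + card ({} \<union> NS U) \<longrightarrow>
      (\<forall>c::nat\<Rightarrow>bool. (\<forall>e\<in>{}. c (fst e) \<noteq> c (snd e)) \<longrightarrow>
        (\<exists>c'. (\<forall>x\<in>{1}. c' x = c x) \<and> (\<forall>e\<in>{} \<union> NS U. c' (fst e) \<noteq> c' (snd e)))))"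
    by (rule grow) (use Ub in auto)
  have s1: "{1} \<union> set U = set U" using Ub by (cases U) auto
  have G2: "card (set U \<union> set V) + card (NS U) \<le> card (set U) + card (NS U \<union> NS V) \<and>
    (card (set U \<union> set V) + card (NS U) = card (set U) + card (NS U \<union> NS V) \<longrightarrow>
      (\<forall>c::nat\<Rightarrow>bool. (\<forall>e\<in>NS U. c (fst e) \<noteq> c (snd e)) \<longrightarrow>
        (\<exists>c'. (\<forall>x\<in>set U. c' x = c x) \<and> (\<forall>e\<in>NS U \<union> NS V. c' (fst e) \<noteq> c' (snd e)))))"
  proof (rule grow)
    show "hd V \<in> set U" using Ub Vb by (cases U) auto
    show "\<forall>e\<in>NS U. fst e \<in> set U \<and> snd e \<in> set U" using NS_sub by blast
  qed (use Vb in auto)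
  have wt: "pair_wt a = card (set U \<union> set V)" by (simp add: pair_wt_def U_def V_def)
  define PE where "PE = pair_edges a"
  define NSa where "NSa = NS U \<union> NS V"
  obtain s where s: "s \<in> word_edges U" "fst s = snd s" using Ub by blast
  have finPE: "finite PE" by (simp add: PE_def pair_edges_def)
  have subPE: "insert s NSa \<subseteq> PE"
    using s by (auto simp: PE_def NSa_def pair_edges_def NS_def U_def V_def)
  have sNS: "s \<notin> NSa" using s by (auto simp: NSa_def NS_def)
  have finNS: "finite NSa" by (simp add: NSa_def)
  have cPE: "Suc (card NSa) \<le> card PE"
    using card_mono[OF finPE subPE] sNS finNS by simp
  have sumPE: "(\<Sum>e\<in>PE. pair_count a e) = 2 * k"
    using sum_pair_count[of a] Ub(4) Vb(4) by (simp add: PE_def U_def V_def)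
  have ge2: "\<forall>e\<in>PE. 2 \<le> pair_count a e" using wk by (simp add: weak_CLT_pair_def PE_def)
  have "card PE * 2 \<le> (\<Sum>e\<in>PE. pair_count a e)"
    using sum_bounded_below[of PE 2 "pair_count a"] ge2 by simp
  hence cPEk: "card PE \<le> k" using sumPE by simp
  have i1: "card (set U) \<le> 1 + card (NS U)" using conjunct1[OF G1] s1 by simp
  have i2: "card (set U \<union> set V) + card (NS U) \<le> card (set U) + card NSa"
    using conjunct1[OF G2] by (simp add: NSa_def)
  show "pair_wt a \<le> k" using wt i1 i2 cPE cPEk by linarith
  assume wtk: "pair_wt a = k"
  have e1': "card (set U) = 1 + card (NS U)" using wt i1 i2 cPE cPEk wtk by linarith
  have e1: "card ({1} \<union> set U) + card ({}::(nat\<times>nat) set) = card {1::nat} + card ({} \<union> NS U)"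
    unfolding s1 using e1' by simp
  have e2': "card (set U \<union> set V) + card (NS U) = card (set U) + card NSa"
    using wt i1 i2 cPE cPEk wtk by linarith
  have e2: "card (set U \<union> set V) + card (NS U) = card (set U) + card (NS U \<union> NS V)"
    using e2' unfolding NSa_def .
  note H1 = spec[OF mp[OF conjunct2[OF G1] e1], of "\<lambda>_. True"]
  have "\<exists>c'::nat\<Rightarrow>bool. (\<forall>x\<in>{1}. c' x = True) \<and> (\<forall>e\<in>{} \<union> NS U. c' (fst e) \<noteq> c' (snd e))"
    by (rule mp[OF H1]) simp
  then obtain c1 :: "nat \<Rightarrow> bool" where c1: "\<forall>e\<in>NS U. c1 (fst e) \<noteq> c1 (snd e)"
    by (elim exE conjE) simp
  note H2 = spec[OF mp[OF conjunct2[OF G2] e2], of c1]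
  have "\<exists>c'::nat\<Rightarrow>bool. (\<forall>x\<in>set U. c' x = c1 x) \<and> (\<forall>e\<in>NS U \<union> NS V. c' (fst e) \<noteq> c' (snd e))"
    by (rule mp[OF H2]) (rule c1)
  then obtain c2 :: "nat \<Rightarrow> bool" where c2: "\<forall>e\<in>NS U \<union> NS V. c2 (fst e) \<noteq> c2 (snd e)"
    by (elim exE conjE) simp
  have cPEeq: "card PE = k" "card PE = Suc (card NSa)" using wt i1 i2 cPE cPEk wtk by linarith+
  have PEeq: "PE = insert s NSa"
    using card_subset_eq[OF finPE subPE] cPEeq sNS finNS by simp
  have cnt2: "\<forall>e\<in>PE. pair_count a e = 2"
  proof -
    have "(\<Sum>e\<in>PE. pair_count a e) = (\<Sum>e\<in>PE. 2 + (pair_count a e - 2))"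
      using ge2 by (intro sum.cong) auto
    also have "\<dots> = (\<Sum>e\<in>PE. 2) + (\<Sum>e\<in>PE. pair_count a e - 2)"
      by (rule sum.distrib)
    also have "\<dots> = 2 * card PE + (\<Sum>e\<in>PE. pair_count a e - 2)"
      by simp
    finally have "(\<Sum>e\<in>PE. pair_count a e - 2) = 0" using sumPE cPEeq by simp
    hence "\<forall>e\<in>PE. pair_count a e - 2 = 0" using finPE by simp
    thus ?thesis using ge2 by force
  qed
  obtain s' where s': "s' \<in> word_edges V" "fst s' = snd s'" using Vb by blast
  have "s' \<in> PE" using s' by (simp add: PE_def pair_edges_def V_def)
  moreover have "s' \<notin> NSa" using s' by (auto simp: NSa_def NS_def)
  ultimately have ss: "s' = s" using PEeq by auto
  have "pair_count a s = 2" using cnt2 subPE by auto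
  moreover have "edge_count U s \<ge> 1" "edge_count V s \<ge> 1"
    using edge_count_pos s(1) s'(1) ss by auto
  ultimately have cV: "edge_count V s = 1" by (simp add: pair_count_def U_def V_def)
  have selfsteps: "{i. Suc i < length V \<and> V ! i = V ! Suc i} = {i. Suc i < length V \<and> mk_edge (V!i) (V!Suc i) = s}"
  proof (intro Collect_cong conj_cong refl)
    fix i assume i: "Suc i < length V"
    have ein: "mk_edge (V!i) (V!Suc i) \<in> PE" using i by (auto simp: PE_def pair_edges_def word_edges_def V_def)
    show "(V ! i = V ! Suc i) = (mk_edge (V ! i) (V ! Suc i) = s)"
    proof
      assume "V ! i = V ! Suc i"
      hence "mk_edge (V!i) (V!Suc i) \<notin> NSa" by (auto simp: NSa_def NS_def)
      thus "mk_edge (V ! i) (V ! Suc i) = s" using ein PEeq by auto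
    next
      assume "mk_edge (V ! i) (V ! Suc i) = s"
      thus "V ! i = V ! Suc i" using s(2) mk_edge_self by metis
    qed
  qed
  have csteps: "card {i. Suc i < length V \<and> V ! i = V ! Suc i} = 1"
    using cV unfolding selfsteps edge_count_def .
  have part: "{i. Suc i < length V} = nsteps V \<union> {i. Suc i < length V \<and> V ! i = V ! Suc i}"
    by (auto simp: nsteps_def)
  have "card {i. Suc i < length V} = k"
  proof -
    have "{i. Suc i < length V} = {..<k}" using Vb(4) by auto
    thus ?thesis by simp
  qed
  moreover have "card ({i. Suc i < length V}) = card (nsteps V) + card {i. Suc i < length V \<and> V ! i = V ! Suc i}"
    unfolding part by (rule card_Un_disjoint) (auto simp: nsteps_def)
  ultimately have "card (nsteps V) + 1 = k" using csteps by simp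
  moreover have "even (card (nsteps V))"
  proof (rule ccontr)
    assume "odd (card (nsteps V))"
    hence "c2 (last V) = (\<not> c2 (hd V))" using parity[OF Vb(1), of c2] c2 by auto
    thus False using Vb(2,3) by simp
  qed
  ultimately show "odd k" by auto
qed


definition rdl :: "nat list \<Rightarrow> nat list" where "rdl xs = rev (remdups (rev xs))"

lemma set_rdl[simp]: "set (rdl xs) = set xs" by (simp add: rdl_def)
lemma distinct_rdl[simp]: "distinct (rdl xs)" by (simp add: rdl_def)

lemma remdups_map_inj: "inj_on f (set xs) \<Longrightarrow> remdups (map f xs) = map f (remdups xs)"
proof (induction xs)
  case Nil thus ?case by simp
next
  case (Cons x xs)
  have i: "inj_on f (set xs)" using Cons.prems by (auto intro: inj_on_subset)
  have "f x \<in> f ` set xs \<longleftrightarrow> x \<in> set xs"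
    using Cons.prems by (auto simp: inj_on_def)
  thus ?case using Cons.IH[OF i] by simp
qed

lemma rdl_map: "inj_on f (set xs) \<Longrightarrow> rdl (map f xs) = map f (rdl xs)"
proof -
  assume "inj_on f (set xs)"
  hence "inj_on f (set (rev xs))" by simp
  hence "remdups (map f (rev xs)) = map f (remdups (rev xs))" by (rule remdups_map_inj)
  thus ?thesis unfolding rdl_def rev_map[symmetric] by (simp add: rev_map)
qed

lemma remdups_snoc: "remdups (zs @ [x]) = remdups (filter (\<lambda>y. y \<noteq> x) zs) @ [x]"
  by (induction zs) auto

lemma hd_rdl: "hd (rdl (x # ys)) = x"
  unfolding rdl_def by (simp add: remdups_snoc)

definition pos :: "nat list \<Rightarrow> nat \<Rightarrow> nat" where
  "pos xs x = length (takeWhile (\<lambda>y. y \<noteq> x) xs)"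

lemma pos_lt: "x \<in> set xs \<Longrightarrow> pos xs x < length xs"
  by (induction xs) (auto simp: pos_def)

lemma nth_pos: "x \<in> set xs \<Longrightarrow> xs ! pos xs x = x"
  using nth_length_takeWhile[of "\<lambda>y. y \<noteq> x" xs] pos_lt[of x xs] by (simp add: pos_def)

lemma pos_nth: "distinct xs \<Longrightarrow> i < length xs \<Longrightarrow> pos xs (xs ! i) = i"
  using nth_pos[of "xs!i" xs] pos_lt[of "xs!i" xs] nth_eq_iff_index_eq[of xs "pos xs (xs!i)" i]
  by simp

lemma pos_inj: "inj_on (pos xs) (set xs)"
  by (rule inj_onI) (metis nth_pos)

lemma pos_map: assumes "inj_on \<phi> (set xs)" "x \<in> set xs"
  shows "pos (map \<phi> xs) (\<phi> x) = pos xs x"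
proof -
  have "takeWhile ((\<lambda>y. y \<noteq> \<phi> x) \<circ> \<phi>) xs = takeWhile (\<lambda>y. y \<noteq> x) xs"
    using assms by (intro takeWhile_cong) (auto simp: inj_on_def)
  thus ?thesis unfolding pos_def takeWhile_map by simp
qed

lemma pos_hd: "xs \<noteq> [] \<Longrightarrow> pos xs (hd xs) = 0"
  by (cases xs) (auto simp: pos_def)

definition Lrep :: "nat list \<times> nat list \<Rightarrow> nat list" where
  "Lrep a = rdl (fst a @ snd a)"

definition rk :: "nat list \<times> nat list \<Rightarrow> nat \<Rightarrow> nat" where
  "rk a x = Suc (pos (Lrep a) x)"

definition canon :: "nat list \<times> nat list \<Rightarrow> nat list \<times> nat list" where
  "canon a = mapp (rk a) a"

definition dec :: "nat list \<Rightarrow> nat list \<times> nat list \<Rightarrow> nat list \<times> nat list" where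
  "dec L c = mapp (\<lambda>i. L ! (i - 1)) c"

lemma set_Lrep: "set (Lrep a) = supp a" by (simp add: Lrep_def supp_def)
lemma distinct_Lrep: "distinct (Lrep a)" by (simp add: Lrep_def)
lemma length_Lrep: "length (Lrep a) = pair_wt a"
  using distinct_card[OF distinct_Lrep[of a]] by (simp add: set_Lrep pair_wt_supp)

lemma mapp_comp: "mapp f (mapp g a) = mapp (\<lambda>x. f (g x)) a"
  by (simp add: mapp_def)

lemma mapp_cong: "(\<And>x. x \<in> supp a \<Longrightarrow> f x = g x) \<Longrightarrow> mapp f a = mapp g a"
  by (auto simp: mapp_def supp_def)

lemma mapp_id: "(\<And>x. x \<in> supp a \<Longrightarrow> f x = x) \<Longrightarrow> mapp f a = a"
  by (cases a) (auto simp: mapp_def supp_def intro: map_idI)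

lemma dec_canon: "dec (Lrep a) (canon a) = a"
  unfolding dec_def canon_def mapp_comp
  by (rule mapp_id) (simp add: rk_def nth_pos set_Lrep)

lemma inj_rk: "inj_on (rk a) (supp a)"
  using pos_inj[of "Lrep a"] by (auto simp: rk_def set_Lrep inj_on_def)

lemma Lrep_mapp: "inj_on \<phi> (supp a) \<Longrightarrow> Lrep (mapp \<phi> a) = map \<phi> (Lrep a)"
  unfolding Lrep_def mapp_def by (simp add: map_append[symmetric] rdl_map supp_def del: map_append)

lemma canon_mapp: assumes "inj_on \<phi> (supp a)" shows "canon (mapp \<phi> a) = canon a"
proof -
  have "canon (mapp \<phi> a) = mapp (\<lambda>x. rk (mapp \<phi> a) (\<phi> x)) a"
    unfolding canon_def mapp_comp ..
  also have "\<dots> = mapp (rk a) a"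
  proof (rule mapp_cong)
    fix x assume "x \<in> supp a"
    thus "rk (mapp \<phi> a) (\<phi> x) = rk a x"
      unfolding rk_def Lrep_mapp[OF assms] using pos_map[of \<phi> "Lrep a" x] assms
      by (simp add: set_Lrep)
  qed
  finally show ?thesis by (simp add: canon_def)
qed

lemma Lrep_canon: "Lrep (canon a) = map Suc [0..<pair_wt a]"
proof -
  have "Lrep (canon a) = map (rk a) (Lrep a)"
    unfolding canon_def by (rule Lrep_mapp[OF inj_rk])
  also have "\<dots> = map (\<lambda>i. rk a (Lrep a ! i)) [0..<length (Lrep a)]"
    by (subst map_nth[symmetric, of "Lrep a"]) (simp only: map_map comp_def)
  also have "\<dots> = map Suc [0..<length (Lrep a)]"
    by (rule map_cong[OF refl]) (simp add: rk_def pos_nth distinct_Lrep)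
  finally show ?thesis by (simp add: length_Lrep)
qed

lemma wt_canon: "pair_wt (canon a) = pair_wt a"
  unfolding canon_def by (rule wt_mapp[OF inj_rk])

lemma supp_canon: "supp (canon a) = {1..pair_wt a}"
proof -
  have "supp (canon a) = set (Lrep (canon a))" by (simp add: set_Lrep)
  also have "\<dots> = Suc ` {0..<pair_wt a}" by (simp add: Lrep_canon)
  also have "\<dots> = {1..pair_wt a}" by (auto simp: image_iff)
  finally show ?thesis .
qed

lemma equiv_canon: "pair_equiv a b \<longleftrightarrow> canon a = canon b"
proof
  assume "pair_equiv a b"
  then obtain \<phi> where \<phi>: "bij_betw \<phi> (supp a) (supp b)" "map \<phi> (fst a) = fst b" "map \<phi> (snd a) = snd b"
    by (auto simp: pair_equiv_def supp_def)
  have b: "b = mapp \<phi> a" using \<phi> by (cases b) (auto simp: mapp_def)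
  show "canon a = canon b" unfolding b using canon_mapp[OF bij_betw_imp_inj_on[OF \<phi>(1)]] by simp
next
  assume eq: "canon a = canon b"
  define \<phi> where "\<phi> x = Lrep b ! pos (Lrep a) x" for x
  have wteq: "pair_wt a = pair_wt b" using wt_canon[of a] wt_canon[of b] eq by simp
  have "b = dec (Lrep b) (canon b)" by (simp add: dec_canon)
  also have "\<dots> = dec (Lrep b) (canon a)" using eq by simp
  also have "\<dots> = mapp \<phi> a" unfolding dec_def canon_def mapp_comp
    by (rule mapp_cong) (simp add: rk_def \<phi>_def)
  finally have b: "b = mapp \<phi> a" .
  have inj: "inj_on \<phi> (supp a)"
  proof (rule inj_onI)
    fix x y assume x: "x \<in> supp a" and y: "y \<in> supp a" and h: "\<phi> x = \<phi> y"
    have lx: "pos (Lrep a) x < length (Lrep b)" "pos (Lrep a) y < length (Lrep b)"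
      using pos_lt[of x "Lrep a"] pos_lt[of y "Lrep a"] x y wteq by (auto simp: set_Lrep length_Lrep)
    hence "pos (Lrep a) x = pos (Lrep a) y"
      using h nth_eq_iff_index_eq[OF distinct_Lrep lx] by (simp add: \<phi>_def)
    thus "x = y" using pos_inj[of "Lrep a"] x y by (auto simp: set_Lrep dest: inj_onD)
  qed
  have "bij_betw \<phi> (supp a) (supp b)"
    unfolding bij_betw_def b supp_mapp using inj by simp
  thus "pair_equiv a b" using b by (auto simp: pair_equiv_def supp_def mapp_def)
qed


lemma V_map:
  assumes w: "w \<in> V_words k" and inj: "inj_on \<phi> (set w)" and one: "\<phi> 1 = 1"
    and pos: "\<forall>x\<in>set w. 1 \<le> \<phi> x"
  shows "map \<phi> w \<in> V_words k"
proof -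
  note b = V_basic[OF w]
  obtain s where s: "s \<in> word_edges w" "fst s = snd s" using b(5) by blast
  have c: "fst s \<in> set w" "snd s \<in> set w" using edge_in_set[OF s(1)] by auto
  have "emap \<phi> s \<in> word_edges (map \<phi> w)" using s(1) by (simp add: word_edges_map)
  moreover have "fst (emap \<phi> s) = snd (emap \<phi> s)" using emap_self[OF inj c] s(2) by simp
  ultimately have se: "\<exists>e\<in>word_edges (map \<phi> w). fst e = snd e" by blast
  show ?thesis using b se pos one
    by (auto simp: V_words_def closed_word_def hd_map last_map)
qed

definition VV :: "nat \<Rightarrow> (nat list \<times> nat list) set" where
  "VV k = {a. fst a \<in> V_words k \<and> snd a \<in> V_words k}"

definition VVN :: "nat \<Rightarrow> nat \<Rightarrow> (nat list \<times> nat list) set" where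
  "VVN N k = {a \<in> VV k. supp a \<subseteq> {1..N}}"

definition Canon :: "nat \<Rightarrow> (nat list \<times> nat list) set" where
  "Canon k = canon ` VV k"

definition DL :: "nat \<Rightarrow> nat \<Rightarrow> nat list set" where
  "DL N m = {L. distinct L \<and> length L = m \<and> set L \<subseteq> {1..N} \<and> L \<noteq> [] \<and> hd L = 1}"

lemma VVN_eq: "VVN N k = V_words_N N k \<times> V_words_N N k"
  by (auto simp: VVN_def VV_def V_words_N_def supp_def)

lemma Lrep_hd: assumes "a \<in> VV k" shows "Lrep a \<noteq> [] \<and> hd (Lrep a) = 1"
proof -
  have u: "fst a \<noteq> []" "hd (fst a) = 1" using V_basic assms by (auto simp: VV_def)
  then obtain t where t: "fst a = 1 # t" by (cases "fst a") auto
  have "Lrep a = rdl (1 # (t @ snd a))" by (simp add: Lrep_def t)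
  moreover have "rdl (1 # (t @ snd a)) \<noteq> []"
    by (metis list.set_intros(1) set_rdl empty_iff list.set(1))
  ultimately show ?thesis using hd_rdl by simp
qed

lemma rk_one: assumes "a \<in> VV k" shows "rk a 1 = 1"
  using Lrep_hd[OF assms] pos_hd[of "Lrep a"] by (simp add: rk_def)

lemma canon_VV: assumes "a \<in> VV k" shows "canon a \<in> VV k"
proof -
  have i1: "inj_on (rk a) (set (fst a))" and i2: "inj_on (rk a) (set (snd a))"
    using inj_rk[of a] by (auto simp: supp_def intro: inj_on_subset)
  have p: "\<And>x. 1 \<le> rk a x" by (simp add: rk_def)
  show ?thesis using assms V_map[OF _ i1 rk_one[OF assms]] V_map[OF _ i2 rk_one[OF assms]] p
    by (auto simp: VV_def canon_def mapp_def)
qed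

lemma canon_canon: "canon (canon a) = canon a"
proof -
  have "canon (mapp (rk a) a) = canon a" by (rule canon_mapp[OF inj_rk])
  moreover have "canon a = mapp (rk a) a" by (simp add: canon_def)
  ultimately show ?thesis by metis
qed

lemma dec_VVN:
  assumes c: "c \<in> VV k" and sc: "supp c = {1..length L}" and L: "L \<in> DL N (length L)"
  shows "dec L c \<in> VVN N k" and "inj_on (\<lambda>i. L ! (i - 1)) (supp c)"
proof -
  define \<phi> where "\<phi> i = L ! (i - 1)" for i
  have dL: "distinct L" "L \<noteq> []" "hd L = 1" "set L \<subseteq> {1..N}" using L by (auto simp: DL_def)
  show inj: "inj_on (\<lambda>i. L ! (i - 1)) (supp c)"
  proof (rule inj_onI)
    fix x y assume xy0: "x \<in> supp c" "y \<in> supp c" and h: "L ! (x - 1) = L ! (y - 1)"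
    have xy: "1 \<le> x" "x \<le> length L" "1 \<le> y" "y \<le> length L" using sc xy0 by auto
    have "x - 1 = y - 1" using nth_eq_iff_index_eq[OF dL(1), of "x-1" "y-1"] xy h by simp
    thus "x = y" using xy by simp
  qed
  have one: "\<phi> 1 = 1" using dL(2,3) by (cases L) (auto simp: \<phi>_def)
  have inS: "\<And>x. x \<in> supp c \<Longrightarrow> \<phi> x \<in> set L" using sc by (auto simp: \<phi>_def)
  have i1: "inj_on \<phi> (set (fst c))" and i2: "inj_on \<phi> (set (snd c))"
  proof -
    have phi: "\<phi> = (\<lambda>i. L ! (i - 1))" by (rule ext) (simp add: \<phi>_def)
    show "inj_on \<phi> (set (fst c))" "inj_on \<phi> (set (snd c))"
      using inj unfolding phi by (auto simp: supp_def intro: inj_on_subset)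
  qed
  have p: "\<forall>x\<in>set (fst c). 1 \<le> \<phi> x" "\<forall>x\<in>set (snd c). 1 \<le> \<phi> x"
    using inS dL(4) by (force simp: supp_def)+
  have "dec L c \<in> VV k" using c V_map[OF _ i1 one p(1)] V_map[OF _ i2 one p(2)]
    by (auto simp: VV_def dec_def mapp_def \<phi>_def)
  moreover have "supp (dec L c) \<subseteq> {1..N}"
    using inS dL(4) by (auto simp: dec_def supp_mapp \<phi>_def)
  ultimately show "dec L c \<in> VVN N k" by (simp add: VVN_def)
qed

lemma count_bij:
  assumes c: "c \<in> Canon k"
  shows "bij_betw Lrep {a \<in> VVN N k. canon a = c} (DL N (pair_wt c))"
proof -
  obtain b where b: "b \<in> VV k" "c = canon b" using c by (auto simp: Canon_def)
  have cVV: "c \<in> VV k" using canon_VV[OF b(1)] b(2) by simp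
  have sc: "supp c = {1..pair_wt c}" using supp_canon[of b] wt_canon[of b] b(2) by simp
  have Lc: "Lrep c = map Suc [0..<pair_wt c]" using Lrep_canon[of b] wt_canon[of b] b(2) by simp
  have cc: "canon c = c" using b(2) canon_canon by simp
  show ?thesis
  proof (rule bij_betw_byWitness[where f' = "\<lambda>L. dec L c"])
    show "\<forall>a\<in>{a \<in> VVN N k. canon a = c}. dec (Lrep a) c = a"
      using dec_canon by auto
  next
    show "\<forall>L\<in>DL N (pair_wt c). Lrep (dec L c) = L"
    proof
      fix L assume L: "L \<in> DL N (pair_wt c)"
      have len: "length L = pair_wt c" using L by (simp add: DL_def)
      have inj: "inj_on (\<lambda>i. L ! (i - 1)) (supp c)" using dec_VVN(2)[OF cVV, of L N] sc len L by simp
      have "Lrep (dec L c) = map (\<lambda>i. L ! (i - 1)) (Lrep c)"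
        unfolding dec_def by (rule Lrep_mapp[OF inj])
      also have "\<dots> = map (\<lambda>i. L ! i) [0..<length L]" unfolding Lc len by simp
      also have "\<dots> = L" by (rule map_nth)
      finally show "Lrep (dec L c) = L" .
    qed
  next
    show "Lrep ` {a \<in> VVN N k. canon a = c} \<subseteq> DL N (pair_wt c)"
    proof
      fix L assume "L \<in> Lrep ` {a \<in> VVN N k. canon a = c}"
      then obtain a where a: "a \<in> VVN N k" "canon a = c" "L = Lrep a" by auto
      have "a \<in> VV k" "supp a \<subseteq> {1..N}" using a(1) by (auto simp: VVN_def)
      thus "L \<in> DL N (pair_wt c)" using a Lrep_hd[of a k] wt_canon[of a]
        by (auto simp: DL_def distinct_Lrep length_Lrep set_Lrep)
    qed
  next
    show "(\<lambda>L. dec L c) ` DL N (pair_wt c) \<subseteq> {a \<in> VVN N k. canon a = c}"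
    proof
      fix a assume "a \<in> (\<lambda>L. dec L c) ` DL N (pair_wt c)"
      then obtain L where L: "L \<in> DL N (pair_wt c)" "a = dec L c" by auto
      have len: "length L = pair_wt c" using L by (simp add: DL_def)
      have inj: "inj_on (\<lambda>i. L ! (i - 1)) (supp c)" using dec_VVN(2)[OF cVV, of L N] sc len L by simp
      have "a \<in> VVN N k" using dec_VVN(1)[OF cVV, of L N] sc len L by simp
      moreover have "canon a = c" unfolding L(2) dec_def canon_mapp[OF inj] cc ..
      ultimately show "a \<in> {a \<in> VVN N k. canon a = c}" by simp
    qed
  qed
qed

lemma finite_VVN: "finite (VVN N k)"
proof -
  let ?S = "{xs. set xs \<subseteq> {1..N} \<and> length xs = k + 1}"
  have "VVN N k \<subseteq> ?S \<times> ?S"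
    by (auto simp: VVN_def VV_def supp_def dest: V_basic(4))
  moreover have "finite (?S \<times> ?S)" using finite_lists_length_eq[of "{1..N}" "k+1"] by simp
  ultimately show ?thesis by (rule finite_subset)
qed

lemma finite_Canon: "finite (Canon k)"
proof -
  let ?S = "{xs. set xs \<subseteq> {1..2*k+2} \<and> length xs = k + 1}"
  have "Canon k \<subseteq> ?S \<times> ?S"
  proof
    fix c assume "c \<in> Canon k"
    then obtain b where b: "b \<in> VV k" "c = canon b" by (auto simp: Canon_def)
    have cVV: "c \<in> VV k" using canon_VV[OF b(1)] b(2) by simp
    have "pair_wt b \<le> length (fst b @ snd b)"
      using card_length[of "fst b @ snd b"] by (simp add: pair_wt_def)
    hence wtb: "pair_wt b \<le> 2*k+2" using b(1) V_basic(4)[of "fst b" k] V_basic(4)[of "snd b" k]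
      by (simp add: VV_def)
    have "supp c \<subseteq> {1..2*k+2}" using supp_canon[of b] b(2) wtb by auto
    thus "c \<in> ?S \<times> ?S" using cVV V_basic(4)[of "fst c" k] V_basic(4)[of "snd c" k]
      by (cases c) (auto simp: VV_def supp_def)
  qed
  moreover have "finite (?S \<times> ?S)" using finite_lists_length_eq[of "{1..2*k+2}" "k+1"] by simp
  ultimately show ?thesis by (rule finite_subset)
qed

lemma sum_decomp:
  assumes g: "\<And>a. a \<in> VV k \<Longrightarrow> g a = g (canon a)"
  shows "(\<Sum>a\<in>VVN N k. g a) = (\<Sum>c\<in>Canon k. g c * real (card (DL N (pair_wt c))))"
proof -
  have "(\<Sum>a\<in>VVN N k. g a) = (\<Sum>c\<in>Canon k. \<Sum>a\<in>{a. a \<in> VVN N k \<and> canon a = c}. g a)"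
    by (rule sum.group[symmetric, OF finite_VVN finite_Canon]) (auto simp: Canon_def VVN_def)
  also have "\<dots> = (\<Sum>c\<in>Canon k. g c * real (card (DL N (pair_wt c))))"
  proof (rule sum.cong[OF refl])
    fix c assume c: "c \<in> Canon k"
    have "(\<Sum>a\<in>{a. a \<in> VVN N k \<and> canon a = c}. g a) = (\<Sum>a\<in>{a. a \<in> VVN N k \<and> canon a = c}. g c)"
      using g by (intro sum.cong) (auto simp: VVN_def)
    also have "\<dots> = g c * real (card {a \<in> VVN N k. canon a = c})" by simp
    also have "card {a \<in> VVN N k. canon a = c} = card (DL N (pair_wt c))"
      by (rule bij_betw_same_card[OF count_bij[OF c]])
    finally show "(\<Sum>a\<in>{a. a \<in> VVN N k \<and> canon a = c}. g a) = g c * real (card (DL N (pair_wt c)))" .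
  qed
  finally show ?thesis .
qed


lemma card_DL: assumes "1 \<le> m" "m \<le> N" shows "card (DL N m) = \<Prod>{N - m + 1..N - 1}"
proof -
  let ?X = "{L'. length L' = m - 1 \<and> distinct L' \<and> set L' \<subseteq> {2..N}}"
  have eq: "DL N m = (Cons 1) ` ?X"
  proof
    show "DL N m \<subseteq> (Cons 1) ` ?X"
    proof
      fix L assume L: "L \<in> DL N m"
      then obtain t where t: "L = 1 # t" unfolding DL_def by (cases L) auto
      have t1: "set t \<subseteq> {1..N}" "1 \<notin> set t" "distinct t" "length t = m - 1"
        using L t by (auto simp: DL_def)
      have "set t \<subseteq> {2..N}"
      proof
        fix x assume "x \<in> set t"
        hence "x \<in> {1..N}" "x \<noteq> 1" using t1 by auto
        thus "x \<in> {2..N}" by auto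
      qed
      hence "t \<in> ?X" using t1 by simp
      thus "L \<in> (Cons 1) ` ?X" using t by auto
    qed
  next
    show "(Cons 1) ` ?X \<subseteq> DL N m"
    proof
      fix L assume "L \<in> (Cons 1) ` ?X"
      then obtain t where t: "L = 1 # t" "t \<in> ?X" by auto
      have "set t \<subseteq> {1..N}" using t(2) by auto
      moreover have "1 \<notin> set t" using t(2) by auto
      ultimately show "L \<in> DL N m" using t assms by (auto simp: DL_def)
    qed
  qed
  have "card (DL N m) = card ?X" unfolding eq by (rule card_image) (auto simp: inj_on_def)
  also have "\<dots> = \<Prod>{card {2..N} - (m - 1) + 1..card {2..N}}"
    by (rule card_lists_distinct_length_eq) (use assms in auto)
  also have "card {2..N} = N - 1" by simp
  also have "N - 1 - (m - 1) + 1 = N - m + 1" using assms by simp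
  finally show ?thesis .
qed

lemma DL_bounds:
  assumes "1 \<le> m" "m \<le> N"
  shows "(N - m + 1) ^ (m - 1) \<le> card (DL N m)" "card (DL N m) \<le> N ^ (m - 1)"
proof -
  have cA: "card {N - m + 1..N - 1} = m - 1" using assms by simp
  show "card (DL N m) \<le> N ^ (m - 1)" unfolding card_DL[OF assms]
    by (rule prod_le_power) (use assms cA in auto)
  have "(N - m + 1) ^ (m - 1) = (\<Prod>i\<in>{N - m + 1..N - 1}. N - m + 1)" using cA by simp
  also have "\<dots> \<le> \<Prod>{N - m + 1..N - 1}" by (rule prod_mono) auto
  finally show "(N - m + 1) ^ (m - 1) \<le> card (DL N m)" unfolding card_DL[OF assms] .
qed

lemma DL_lim:
  assumes "1 \<le> m" "m \<le> k"
  shows "(\<lambda>N. real (card (DL N m)) / real N ^ (k - 1)) \<longlonglongrightarrow> (if m = k then 1 else 0)"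
proof (cases "m = k")
  case False
  hence mk: "m < k" using assms by simp
  have ev1: "eventually (\<lambda>N. 0 \<le> real (card (DL N m)) / real N ^ (k - 1)) sequentially" by simp
  have ev2: "eventually (\<lambda>N. real (card (DL N m)) / real N ^ (k - 1) \<le> 1 / real N) sequentially"
    unfolding eventually_sequentially
  proof (intro exI allI impI)
    fix N assume N: "k \<le> N"
    have Npos: "real N \<ge> 1" using N assms by simp
    have A: "real (card (DL N m)) \<le> real N ^ (m - 1)"
      using DL_bounds(2)[of m N] assms N by (simp flip: of_nat_power)
    have E: "real N ^ (k - 1) = real N ^ (m - 1) * real N ^ (k - m)"
      using assms mk by (simp flip: power_add)
    have Q: "real N \<le> real N ^ (k - m)"
      using power_increasing[of 1 "k - m" "real N"] Npos mk by simp
    have P0: "real N ^ (m - 1) > 0" using Npos by simp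
    have "real (card (DL N m)) / real N ^ (k - 1) \<le> real N ^ (m - 1) / real N ^ (k - 1)"
      by (rule divide_right_mono[OF A]) simp
    also have "\<dots> = 1 / real N ^ (k - m)" unfolding E
      by (rule nonzero_divide_mult_cancel_left) (use P0 in linarith)
    also have "\<dots> \<le> 1 / real N"
      by (rule divide_left_mono[OF Q]) (use Npos in auto)
    finally show "real (card (DL N m)) / real N ^ (k - 1) \<le> 1 / real N" .
  qed
  have "(\<lambda>N. real (card (DL N m)) / real N ^ (k - 1)) \<longlonglongrightarrow> 0"
    by (rule tendsto_sandwich[OF ev1 ev2 tendsto_const lim_const_over_n])
  thus ?thesis using False by simp
next
  case True
  have ev1: "eventually (\<lambda>N. (1 - (real k - 1) / real N) ^ (k - 1) \<le> real (card (DL N m)) / real N ^ (k - 1)) sequentially"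
    unfolding eventually_sequentially
  proof (intro exI allI impI)
    fix N assume N: "k \<le> N"
    have Npos: "real N \<ge> 1" using N assms by simp
    have a0: "(N - m + 1) ^ (k - 1) \<le> card (DL N m)"
      using DL_bounds(1)[of m N] assms N True by simp
    have a: "real (N - m + 1) ^ (k - 1) \<le> real (card (DL N m))"
      using of_nat_mono[OF a0, where 'a=real] by (simp only: of_nat_power)
    have a_eq: "real (N - m + 1) = real N - real k + 1" using N True by (simp add: of_nat_diff)
    have x_eq: "1 - (real k - 1) / real N = (real N - real k + 1) / real N"
      using Npos by (simp add: field_simps)
    have "(1 - (real k - 1) / real N) ^ (k - 1) = real (N - m + 1) ^ (k - 1) / real N ^ (k - 1)"
      unfolding x_eq a_eq by (rule power_divide)
    also have "\<dots> \<le> real (card (DL N m)) / real N ^ (k - 1)"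
      by (rule divide_right_mono[OF a]) simp
    finally show "(1 - (real k - 1) / real N) ^ (k - 1) \<le> real (card (DL N m)) / real N ^ (k - 1)" .
  qed
  have ev2: "eventually (\<lambda>N. real (card (DL N m)) / real N ^ (k - 1) \<le> 1) sequentially"
    unfolding eventually_sequentially
  proof (intro exI allI impI)
    fix N assume N: "k \<le> N"
    have Npos: "real N \<ge> 1" using N assms by simp
    have "real (card (DL N m)) \<le> real N ^ (k - 1)"
      using DL_bounds(2)[of m N] assms N True by (simp flip: of_nat_power)
    hence "real (card (DL N m)) / real N ^ (k - 1) \<le> real N ^ (k - 1) / real N ^ (k - 1)"
      by (rule divide_right_mono) simp
    thus "real (card (DL N m)) / real N ^ (k - 1) \<le> 1" using Npos by simp
  qed
  have l0: "(\<lambda>N. (1 - (real k - 1) / real N) ^ (k - 1)) \<longlonglongrightarrow> (1 - 0) ^ (k - 1)"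
    by (intro tendsto_power tendsto_diff tendsto_const lim_const_over_n)
  hence l: "(\<lambda>N. (1 - (real k - 1) / real N) ^ (k - 1)) \<longlonglongrightarrow> 1" by simp
  have "(\<lambda>N. real (card (DL N m)) / real N ^ (k - 1)) \<longlonglongrightarrow> 1"
    using tendsto_sandwich[OF ev1 ev2 l tendsto_const] by simp
  thus ?thesis using True by simp
qed




locale wig = prob_space M for M :: "'a measure" +
  fixes \<xi> :: "nat \<Rightarrow> nat \<Rightarrow> 'a \<Rightarrow> real"
  assumes meas: "\<And>i j. 1 \<le> i \<Longrightarrow> i \<le> j \<Longrightarrow> \<xi> i j \<in> borel_measurable M"
    and indep: "indep_vars (\<lambda>_. borel) (\<lambda>p. \<xi> (fst p) (snd p)) {p. 1 \<le> fst p \<and> fst p \<le> snd p}"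
    and diag_id: "\<And>i. 1 \<le> i \<Longrightarrow> distr M borel (\<xi> i i) = distr M borel (\<xi> 1 1)"
    and off_id: "\<And>i j. 1 \<le> i \<Longrightarrow> i < j \<Longrightarrow> distr M borel (\<xi> i j) = distr M borel (\<xi> 1 2)"
    and mean0: "\<And>i j. 1 \<le> i \<Longrightarrow> i \<le> j \<Longrightarrow> integral\<^sup>L M (\<xi> i j) = 0"
    and moments_diag: "\<And>p::nat. integrable M (\<lambda>x. \<bar>\<xi> 1 1 x\<bar> ^ p)"
    and moments_off: "\<And>p::nat. integrable M (\<lambda>x. \<bar>\<xi> 1 2 x\<bar> ^ p)"
begin

definition mu :: "nat \<times> nat \<Rightarrow> nat \<Rightarrow> real" where
  "mu e n = (if fst e = snd e then integral\<^sup>L M (\<lambda>x. \<xi> 1 1 x ^ n) else integral\<^sup>L M (\<lambda>x. \<xi> 1 2 x ^ n))"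

lemma int11: "integrable M (\<lambda>x. \<xi> 1 1 x ^ n)"
proof -
  have m[measurable]: "\<xi> 1 1 \<in> borel_measurable M" using meas[of 1 1] by simp
  have mp: "(\<lambda>x. \<xi> 1 1 x ^ n) \<in> borel_measurable M" by measurable
  have e: "(\<lambda>x. \<bar>\<xi> 1 1 x ^ n\<bar>) = (\<lambda>x. \<bar>\<xi> 1 1 x\<bar> ^ n)" by (simp add: power_abs)
  show ?thesis using iffD1[OF integrable_abs_iff[OF mp]] moments_diag[of n] e by simp
qed

lemma int12: "integrable M (\<lambda>x. \<xi> 1 2 x ^ n)"
proof -
  have m[measurable]: "\<xi> 1 2 \<in> borel_measurable M" using meas[of 1 2] by simp
  have mp: "(\<lambda>x. \<xi> 1 2 x ^ n) \<in> borel_measurable M" by measurable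
  have e: "(\<lambda>x. \<bar>\<xi> 1 2 x ^ n\<bar>) = (\<lambda>x. \<bar>\<xi> 1 2 x\<bar> ^ n)" by (simp add: power_abs)
  show ?thesis using iffD1[OF integrable_abs_iff[OF mp]] moments_off[of n] e by simp
qed

lemma int_pow_gen:
  fixes X Y :: "'a \<Rightarrow> real"
  assumes X: "X \<in> borel_measurable M" and Y: "Y \<in> borel_measurable M"
    and d: "distr M borel X = distr M borel Y" and iY: "integrable M (\<lambda>x. Y x ^ n)"
  shows "integrable M (\<lambda>x. X x ^ n) \<and> integral\<^sup>L M (\<lambda>x. X x ^ n) = integral\<^sup>L M (\<lambda>x. Y x ^ n)"
proof -
  have pm: "(\<lambda>t::real. t ^ n) \<in> borel_measurable borel" by measurable
  have "integrable (distr M borel Y) (\<lambda>t. t ^ n)"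
    using iffD2[OF integrable_distr_eq[OF Y pm] iY] .
  hence "integrable (distr M borel X) (\<lambda>t. t ^ n)" using d by simp
  hence a: "integrable M (\<lambda>x. X x ^ n)" using iffD1[OF integrable_distr_eq[OF X pm]] by blast
  have "integral\<^sup>L M (\<lambda>x. X x ^ n) = integral\<^sup>L (distr M borel X) (\<lambda>t. t ^ n)"
    using integral_distr[OF X pm] by simp
  also have "\<dots> = integral\<^sup>L (distr M borel Y) (\<lambda>t. t ^ n)" using d by simp
  also have "\<dots> = integral\<^sup>L M (\<lambda>x. Y x ^ n)" using integral_distr[OF Y pm] by simp
  finally show ?thesis using a by simp
qed

lemma int_pow: assumes "1 \<le> i" "i \<le> j" shows "integrable M (\<lambda>x. \<xi> i j x ^ n)"
   and "integral\<^sup>L M (\<lambda>x. \<xi> i j x ^ n) = mu (i,j) n"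
proof -
  have mij: "\<xi> i j \<in> borel_measurable M" using meas[OF assms] .
  have m11: "\<xi> 1 1 \<in> borel_measurable M" using meas[of 1 1] by simp
  have m12: "\<xi> 1 2 \<in> borel_measurable M" using meas[of 1 2] by simp
  have "integrable M (\<lambda>x. \<xi> i j x ^ n) \<and> integral\<^sup>L M (\<lambda>x. \<xi> i j x ^ n) = mu (i,j) n"
  proof (cases "i = j")
    case True
    have d: "distr M borel (\<xi> i j) = distr M borel (\<xi> 1 1)" using diag_id[OF assms(1)] True by simp
    show ?thesis using int_pow_gen[OF mij m11 d int11] True by (simp add: mu_def)
  next
    case False
    have d: "distr M borel (\<xi> i j) = distr M borel (\<xi> 1 2)" using off_id[of i j] assms False by simp
    show ?thesis using int_pow_gen[OF mij m12 d int12] False by (simp add: mu_def)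
  qed
  thus "integrable M (\<lambda>x. \<xi> i j x ^ n)" "integral\<^sup>L M (\<lambda>x. \<xi> i j x ^ n) = mu (i,j) n" by auto
qed

lemma mu1: "mu e 1 = 0"
  using mean0[of 1 1] mean0[of 1 2] by (simp add: mu_def)

lemma prod_edges:
  assumes "finite S" "S \<subseteq> {p. 1 \<le> fst p \<and> fst p \<le> snd p}"
  shows "integrable M (\<lambda>x. \<Prod>e\<in>S. \<xi> (fst e) (snd e) x ^ c e)"
    and "integral\<^sup>L M (\<lambda>x. \<Prod>e\<in>S. \<xi> (fst e) (snd e) x ^ c e) = (\<Prod>e\<in>S. mu e (c e))"
proof -
  have ind0: "indep_vars (\<lambda>_. borel) (\<lambda>p. \<xi> (fst p) (snd p)) S"
    by (rule indep_vars_subset[OF indep assms(2)])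
  have ind: "indep_vars (\<lambda>_. borel) (\<lambda>e x. \<xi> (fst e) (snd e) x ^ c e) S"
    by (rule indep_vars_compose2[OF ind0, of "\<lambda>e t. t ^ c e" "\<lambda>_. borel"]) simp
  have ii: "\<And>e. e \<in> S \<Longrightarrow> integrable M (\<lambda>x. \<xi> (fst e) (snd e) x ^ c e)"
  proof -
    fix e assume "e \<in> S"
    then obtain i j where e: "e = (i,j)" "1 \<le> i" "i \<le> j" using assms(2) by (cases e) auto
    show "integrable M (\<lambda>x. \<xi> (fst e) (snd e) x ^ c e)" using int_pow(1)[OF e(2,3)] e(1) by simp
  qed
  show "integrable M (\<lambda>x. \<Prod>e\<in>S. \<xi> (fst e) (snd e) x ^ c e)"
    by (rule indep_vars_integrable[OF assms(1) ind ii])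
  show "integral\<^sup>L M (\<lambda>x. \<Prod>e\<in>S. \<xi> (fst e) (snd e) x ^ c e) = (\<Prod>e\<in>S. mu e (c e))"
    apply (subst indep_vars_lebesgue_integral[OF assms(1) ind ii], simp)
    apply (rule prod.cong, simp)
  proof -
    fix e assume "e \<in> S"
    then obtain i j where e: "e = (i,j)" "1 \<le> i" "i \<le> j" using assms(2) by (cases e) auto
    show "integral\<^sup>L M (\<lambda>x. \<xi> (fst e) (snd e) x ^ c e) = mu e (c e)"
      using int_pow(2)[OF e(2,3)] e(1) by simp
  qed
qed


definition posw :: "nat list \<Rightarrow> bool" where "posw w \<longleftrightarrow> (\<forall>x\<in>set w. 1 \<le> x)"

lemma edges_pos: "posw w \<Longrightarrow> word_edges w \<subseteq> {p. 1 \<le> fst p \<and> fst p \<le> snd p}"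
  unfolding posw_def word_edges_def by (auto simp: min_def max_def)

lemma self_inv_mu: "self_inv mu"
  unfolding self_inv_def mu_def by auto

lemma T_word_eq: "T_word \<xi> w = (\<lambda>x. \<Prod>e\<in>word_edges w. \<xi> (fst e) (snd e) x ^ edge_count w e)"
  by (rule ext) (simp add: T_word_def)

lemma T_int: assumes "posw w"
  shows "integrable M (T_word \<xi> w)"
    and "integral\<^sup>L M (T_word \<xi> w) = (\<Prod>e\<in>word_edges w. mu e (edge_count w e))"
  unfolding T_word_eq using prod_edges[OF finite_word_edges edges_pos[OF assms]] by auto

lemma TT_eq:
  "(\<lambda>x. T_word \<xi> (fst a) x * T_word \<xi> (snd a) x)
     = (\<lambda>x. \<Prod>e\<in>pair_edges a. \<xi> (fst e) (snd e) x ^ pair_count a e)"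
proof (rule ext)
  fix x
  have fin: "finite (pair_edges a)" by (simp add: pair_edges_def)
  have 1: "T_word \<xi> (fst a) x = (\<Prod>e\<in>pair_edges a. \<xi> (fst e) (snd e) x ^ edge_count (fst a) e)"
    unfolding T_word_def pair_edges_def
    by (rule prod.mono_neutral_left) (auto simp: edge_count_zero)
  have 2: "T_word \<xi> (snd a) x = (\<Prod>e\<in>pair_edges a. \<xi> (fst e) (snd e) x ^ edge_count (snd a) e)"
    unfolding T_word_def pair_edges_def
    by (rule prod.mono_neutral_left) (auto simp: edge_count_zero)
  show "T_word \<xi> (fst a) x * T_word \<xi> (snd a) x = (\<Prod>e\<in>pair_edges a. \<xi> (fst e) (snd e) x ^ pair_count a e)"
    unfolding 1 2 prod.distrib[symmetric] by (simp add: pair_count_def power_add)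
qed

lemma Tbar_prod:
  assumes "posw (fst a)" "posw (snd a)"
  shows "integrable M (\<lambda>x. Tbar_word M \<xi> (fst a) x * Tbar_word M \<xi> (snd a) x)"
    and "integral\<^sup>L M (\<lambda>x. Tbar_word M \<xi> (fst a) x * Tbar_word M \<xi> (snd a) x) = Gf mu a"
proof -
  define U where "U = T_word \<xi> (fst a)"
  define V where "V = T_word \<xi> (snd a)"
  define cu where "cu = integral\<^sup>L M U"
  define cv where "cv = integral\<^sup>L M V"
  have iU: "integrable M U" and eU: "cu = (\<Prod>e\<in>word_edges (fst a). mu e (edge_count (fst a) e))"
    using T_int[OF assms(1)] by (auto simp: U_def cu_def)
  have iV: "integrable M V" and eV: "cv = (\<Prod>e\<in>word_edges (snd a). mu e (edge_count (snd a) e))"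
    using T_int[OF assms(2)] by (auto simp: V_def cv_def)
  have pe: "pair_edges a \<subseteq> {p. 1 \<le> fst p \<and> fst p \<le> snd p}"
    using edges_pos[OF assms(1)] edges_pos[OF assms(2)] by (auto simp: pair_edges_def)
  have fin: "finite (pair_edges a)" by (simp add: pair_edges_def)
  have iUV: "integrable M (\<lambda>x. U x * V x)"
    and eUV: "integral\<^sup>L M (\<lambda>x. U x * V x) = (\<Prod>e\<in>pair_edges a. mu e (pair_count a e))"
    unfolding U_def V_def TT_eq using prod_edges[OF fin pe] by auto
  have eq: "(\<lambda>x. Tbar_word M \<xi> (fst a) x * Tbar_word M \<xi> (snd a) x)
      = (\<lambda>x. (U x * V x - cv * U x) - (cu * V x - cu * cv))"
    by (rule ext) (simp add: Tbar_word_def U_def V_def cu_def cv_def algebra_simps)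
  have i1: "integrable M (\<lambda>x. U x * V x - cv * U x)" using iUV iU by auto
  have i2: "integrable M (\<lambda>x. cu * V x - cu * cv)" using iV by auto
  show "integrable M (\<lambda>x. Tbar_word M \<xi> (fst a) x * Tbar_word M \<xi> (snd a) x)"
    unfolding eq using i1 i2 by auto
  have "integral\<^sup>L M (\<lambda>x. (U x * V x - cv * U x) - (cu * V x - cu * cv))
      = integral\<^sup>L M (\<lambda>x. U x * V x - cv * U x) - integral\<^sup>L M (\<lambda>x. cu * V x - cu * cv)"
    by (rule Bochner_Integration.integral_diff[OF i1 i2])
  also have "integral\<^sup>L M (\<lambda>x. U x * V x - cv * U x) = integral\<^sup>L M (\<lambda>x. U x * V x) - cv * cu"
    using iUV iU by (simp add: cu_def)
  also have "integral\<^sup>L M (\<lambda>x. cu * V x - cu * cv) = cu * cv - cu * cv"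
    using iV by (simp add: cv_def prob_space)
  finally show "integral\<^sup>L M (\<lambda>x. Tbar_word M \<xi> (fst a) x * Tbar_word M \<xi> (snd a) x) = Gf mu a"
    unfolding eq eUV Gf_def eU[symmetric] eV[symmetric] by simp
qed

lemma VV_posw: "a \<in> VV k \<Longrightarrow> posw (fst a) \<and> posw (snd a)"
  by (simp add: VV_def V_words_def posw_def)

lemma EZ2:
  assumes N: "1 \<le> N" and k: "1 \<le> k"
  shows "integral\<^sup>L M (\<lambda>x. (Z_var M \<xi> N k x)\<^sup>2)
       = (\<Sum>c\<in>Canon k. Gf mu c * (real (card (DL N (pair_wt c))) / real N ^ (k - 1)))"
proof -
  define p where "p = real N powr (- (real k - 1) / 2)"
  have fV: "finite (V_words_N N k)" using finite_VVN[of N k] unfolding VVN_eq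
    by (metis finite_cartesian_productD1 Sigma_empty2 finite.emptyI)
  have sq: "\<And>x. (Z_var M \<xi> N k x)\<^sup>2 = p\<^sup>2 * (\<Sum>a\<in>VVN N k. Tbar_word M \<xi> (fst a) x * Tbar_word M \<xi> (snd a) x)"
  proof -
    fix x
    have "(\<Sum>w\<in>V_words_N N k. Tbar_word M \<xi> w x)\<^sup>2
        = (\<Sum>a\<in>V_words_N N k \<times> V_words_N N k. Tbar_word M \<xi> (fst a) x * Tbar_word M \<xi> (snd a) x)"
      unfolding power2_eq_square sum_product sum.cartesian_product by (simp add: case_prod_beta)
    thus "(Z_var M \<xi> N k x)\<^sup>2 = p\<^sup>2 * (\<Sum>a\<in>VVN N k. Tbar_word M \<xi> (fst a) x * Tbar_word M \<xi> (snd a) x)"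
      unfolding Z_var_def p_def VVN_eq by (simp add: power_mult_distrib)
  qed
  have p2: "p\<^sup>2 = 1 / real N ^ (k - 1)"
  proof -
    have Np: "real N > 0" using N by simp
    have "p\<^sup>2 = real N powr (of_nat 2 * (- (real k - 1) / 2))"
      unfolding p_def by (rule powr_power) (use Np in simp)
    also have "of_nat 2 * (- (real k - 1) / 2) = - real (k - 1)" using k by (simp add: of_nat_diff)
    also have "real N powr (- real (k - 1)) = 1 / real N ^ (k - 1)"
      using Np by (simp add: powr_minus powr_realpow divide_inverse)
    finally show ?thesis .
  qed
  have "integral\<^sup>L M (\<lambda>x. (Z_var M \<xi> N k x)\<^sup>2)
      = p\<^sup>2 * integral\<^sup>L M (\<lambda>x. \<Sum>a\<in>VVN N k. Tbar_word M \<xi> (fst a) x * Tbar_word M \<xi> (snd a) x)"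
    unfolding sq by (rule integral_mult_right_zero)
  also have "integral\<^sup>L M (\<lambda>x. \<Sum>a\<in>VVN N k. Tbar_word M \<xi> (fst a) x * Tbar_word M \<xi> (snd a) x)
      = (\<Sum>a\<in>VVN N k. integral\<^sup>L M (\<lambda>x. Tbar_word M \<xi> (fst a) x * Tbar_word M \<xi> (snd a) x))"
    by (rule Bochner_Integration.integral_sum) (use Tbar_prod(1) VV_posw in \<open>auto simp: VVN_def\<close>)
  also have "\<dots> = (\<Sum>a\<in>VVN N k. Gf mu a)"
    by (rule sum.cong[OF refl]) (use Tbar_prod(2) VV_posw in \<open>auto simp: VVN_def\<close>)
  also have "\<dots> = (\<Sum>c\<in>Canon k. Gf mu c * real (card (DL N (pair_wt c))))"
  proof (rule sum_decomp)
    fix a assume "a \<in> VV k"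
    show "Gf mu a = Gf mu (canon a)" unfolding canon_def
      by (rule Gf_mapp[OF inj_rk self_inv_mu, symmetric])
  qed
  finally show ?thesis unfolding p2 by (simp add: sum_distrib_left)
qed


lemma CLT_VV: "a \<in> CLT_pairs k \<Longrightarrow> a \<in> VV k \<and> weak_CLT_pair a \<and> pair_wt a = k"
  by (simp add: CLT_pairs_def VV_def)

lemma canon_CLT: "canon ` CLT_pairs k = {c \<in> Canon k. weak_CLT_pair c \<and> pair_wt c = k}"
proof
  show "canon ` CLT_pairs k \<subseteq> {c \<in> Canon k. weak_CLT_pair c \<and> pair_wt c = k}"
  proof
    fix c assume "c \<in> canon ` CLT_pairs k"
    then obtain a where a: "a \<in> CLT_pairs k" "c = canon a" by auto
    note A = CLT_VV[OF a(1)]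
    have "weak_CLT_pair c" using A weak_mapp[OF inj_rk, of a] a(2) by (simp add: canon_def)
    moreover have "pair_wt c = k" using A wt_canon[of a] a(2) by simp
    moreover have "c \<in> Canon k" using A a(2) by (auto simp: Canon_def)
    ultimately show "c \<in> {c \<in> Canon k. weak_CLT_pair c \<and> pair_wt c = k}" by simp
  qed
next
  show "{c \<in> Canon k. weak_CLT_pair c \<and> pair_wt c = k} \<subseteq> canon ` CLT_pairs k"
  proof
    fix c assume c: "c \<in> {c \<in> Canon k. weak_CLT_pair c \<and> pair_wt c = k}"
    then obtain b where b: "b \<in> VV k" "c = canon b" by (auto simp: Canon_def)
    have "weak_CLT_pair b" using c b weak_mapp[OF inj_rk, of b] by (simp add: canon_def)
    moreover have "pair_wt b = k" using c b wt_canon[of b] by simp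
    ultimately have "b \<in> CLT_pairs k" using b(1) by (simp add: CLT_pairs_def VV_def)
    thus "c \<in> canon ` CLT_pairs k" using b(2) by auto
  qed
qed

lemma class_eq: "a0 \<in> CLT_pairs k \<Longrightarrow> CLT_pair_rel k `` {a0} = {b \<in> CLT_pairs k. canon b = canon a0}"
  by (auto simp: CLT_pair_rel_def equiv_canon)

lemma limit_sum_eq: "limit_sum M \<xi> k = (\<Sum>c\<in>canon ` CLT_pairs k. Gf mu c)"
proof -
  define Q where "Q = CLT_pairs k // CLT_pair_rel k"
  define h where "h C = canon (SOME a. a \<in> C)" for C :: "(nat list \<times> nat list) set"
  have hC: "h C = canon a0 \<and> (SOME a. a \<in> C) \<in> CLT_pairs k"
    if "C = CLT_pair_rel k `` {a0}" "a0 \<in> CLT_pairs k" for C a0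
  proof -
    have C: "C = {b \<in> CLT_pairs k. canon b = canon a0}" using that class_eq by simp
    have "a0 \<in> C" using C that(2) by simp
    hence "(SOME a. a \<in> C) \<in> C" by (rule someI)
    thus ?thesis using C by (simp add: h_def)
  qed
  have "limit_sum M \<xi> k = (\<Sum>C\<in>Q. Gf mu (h C))"
    unfolding limit_sum_def Q_def[symmetric] Let_def
  proof (rule sum.cong[OF refl])
    fix C assume "C \<in> Q"
    then obtain a0 where a0: "C = CLT_pair_rel k `` {a0}" "a0 \<in> CLT_pairs k"
      unfolding Q_def by (rule quotientE)
    define a1 where "a1 = (SOME a. a \<in> C)"
    have a1: "a1 \<in> CLT_pairs k" "canon a1 = canon a0" "h C = canon a0"
      using hC[OF a0] class_eq[OF a0(2)] a0(1) someI[of "\<lambda>a. a \<in> C" a0] a0(2)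
      by (auto simp: a1_def)
    have p: "posw (fst a1)" "posw (snd a1)" using VV_posw[of a1 k] CLT_VV[OF a1(1)] by auto
    have "integral\<^sup>L M (\<lambda>x. Tbar_word M \<xi> (fst a1) x * Tbar_word M \<xi> (snd a1) x) = Gf mu a1"
      by (rule Tbar_prod(2)[OF p])
    also have "\<dots> = Gf mu (canon a1)" unfolding canon_def
      by (rule Gf_mapp[OF inj_rk self_inv_mu, symmetric])
    finally show "integral\<^sup>L M (\<lambda>x. Tbar_word M \<xi> (fst a1) x * Tbar_word M \<xi> (snd a1) x) = Gf mu (h C)"
      using a1 by simp
  qed
  also have "\<dots> = (\<Sum>c\<in>h ` Q. Gf mu c)"
  proof (rule sum.reindex[symmetric, unfolded comp_def])
    show "inj_on h Q"
    proof (rule inj_onI)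
      fix C1 C2 assume C1: "C1 \<in> Q" and C2: "C2 \<in> Q" and eq: "h C1 = h C2"
      obtain a where a: "C1 = CLT_pair_rel k `` {a}" "a \<in> CLT_pairs k"
        using C1 unfolding Q_def by (rule quotientE)
      obtain b where b: "C2 = CLT_pair_rel k `` {b}" "b \<in> CLT_pairs k"
        using C2 unfolding Q_def by (rule quotientE)
      have "canon a = canon b" using hC[OF a] hC[OF b] eq by simp
      thus "C1 = C2" using a b class_eq by simp
    qed
  qed
  also have "h ` Q = canon ` CLT_pairs k"
  proof
    show "h ` Q \<subseteq> canon ` CLT_pairs k"
    proof
      fix c assume "c \<in> h ` Q"
      then obtain C where C: "C \<in> Q" "c = h C" by auto
      obtain a where a: "C = CLT_pair_rel k `` {a}" "a \<in> CLT_pairs k"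
        using C(1) unfolding Q_def by (rule quotientE)
      show "c \<in> canon ` CLT_pairs k" using hC[OF a] C(2) a(2) by auto
    qed
  next
    show "canon ` CLT_pairs k \<subseteq> h ` Q"
    proof
      fix c assume "c \<in> canon ` CLT_pairs k"
      then obtain a where a: "a \<in> CLT_pairs k" "c = canon a" by auto
      have "CLT_pair_rel k `` {a} \<in> Q" unfolding Q_def by (rule quotientI[OF a(1)])
      moreover have "h (CLT_pair_rel k `` {a}) = c" using hC[OF refl a(1)] a(2) by simp
      ultimately show "c \<in> h ` Q" by (metis image_eqI)
    qed
  qed
  finally show ?thesis .
qed

lemma main_lim:
  assumes k: "1 \<le> k"
  shows "(\<lambda>N. integral\<^sup>L M (\<lambda>x. (Z_var M \<xi> N k x)\<^sup>2)) \<longlonglongrightarrow> limit_sum M \<xi> k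
         \<and> (even k \<longrightarrow> limit_sum M \<xi> k = 0)"
proof
  define S where "S = (\<Sum>c\<in>Canon k. Gf mu c * (if pair_wt c = k then 1 else 0))"
  have lim1: "(\<lambda>N. \<Sum>c\<in>Canon k. Gf mu c * (real (card (DL N (pair_wt c))) / real N ^ (k - 1))) \<longlonglongrightarrow> S"
    unfolding S_def
  proof (rule tendsto_sum)
    fix c assume c: "c \<in> Canon k"
    show "(\<lambda>N. Gf mu c * (real (card (DL N (pair_wt c))) / real N ^ (k - 1)))
        \<longlonglongrightarrow> Gf mu c * (if pair_wt c = k then 1 else 0)"
    proof (cases "Gf mu c = 0")
      case True thus ?thesis by simp
    next
      case False
      hence wk: "weak_CLT_pair c" using Gf_zero[of mu c] mu1 by blast
      obtain b where b: "b \<in> VV k" "c = canon b" using c by (auto simp: Canon_def)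
      have cVV: "c \<in> VV k" using canon_VV[OF b(1)] b(2) by simp
      have le: "pair_wt c \<le> k" using wt_bound(1)[of c k] cVV wk by (simp add: VV_def)
      have "fst c \<noteq> []" using cVV V_basic(1) by (auto simp: VV_def)
      hence "supp c \<noteq> {}" by (cases "fst c") (auto simp: supp_def)
      moreover have "finite (supp c)" by (simp add: supp_def)
      ultimately have ge: "1 \<le> pair_wt c" by (simp add: pair_wt_supp Suc_le_eq card_gt_0_iff)
      show ?thesis by (rule tendsto_mult_left[OF DL_lim[OF ge le]])
    qed
  qed
  have "(\<lambda>N. integral\<^sup>L M (\<lambda>x. (Z_var M \<xi> N k x)\<^sup>2)) \<longlonglongrightarrow> S"
  proof (rule Lim_transform_eventually[OF lim1])
    show "\<forall>\<^sub>F N in sequentially. (\<Sum>c\<in>Canon k. Gf mu c * (real (card (DL N (pair_wt c))) / real N ^ (k - 1)))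
        = integral\<^sup>L M (\<lambda>x. (Z_var M \<xi> N k x)\<^sup>2)"
      unfolding eventually_sequentially using EZ2[OF _ k] by (intro exI[of _ 1]) auto
  qed
  moreover have "S = limit_sum M \<xi> k"
  proof -
    have "S = (\<Sum>c\<in>{c \<in> Canon k. pair_wt c = k}. Gf mu c)"
      unfolding S_def by (subst sum.inter_filter[OF finite_Canon]) (auto intro: sum.cong)
    also have "\<dots> = (\<Sum>c\<in>{c \<in> Canon k. weak_CLT_pair c \<and> pair_wt c = k}. Gf mu c)"
      by (rule sum.mono_neutral_right) (auto simp: finite_Canon intro: Gf_zero mu1)
    also have "\<dots> = limit_sum M \<xi> k" by (simp add: limit_sum_eq canon_CLT)
    finally show ?thesis .
  qed
  ultimately show "(\<lambda>N. integral\<^sup>L M (\<lambda>x. (Z_var M \<xi> N k x)\<^sup>2)) \<longlonglongrightarrow> limit_sum M \<xi> k" by simp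
next
  show "even k \<longrightarrow> limit_sum M \<xi> k = 0"
  proof
    assume ev: "even k"
    have "CLT_pairs k = {}"
    proof (rule ccontr)
      assume "CLT_pairs k \<noteq> {}"
      then obtain a where a: "a \<in> CLT_pairs k" by auto
      note A = CLT_VV[OF a]
      have "odd k" using wt_bound(2)[of a k] A by (simp add: VV_def)
      thus False using ev by simp
    qed
    thus "limit_sum M \<xi> k = 0" by (simp add: limit_sum_eq)
  qed
qed

end

theorem mainTheorem15:
  fixes M :: "'a measure" and \<xi> :: "nat \<Rightarrow> nat \<Rightarrow> 'a \<Rightarrow> real" and k :: nat
  assumes "prob_space M"
    and meas: "\<And>i j. 1 \<le> i \<Longrightarrow> i \<le> j \<Longrightarrow> \<xi> i j \<in> borel_measurable M"
    and indep: "prob_space.indep_vars M (\<lambda>_. borel) (\<lambda>p. \<xi> (fst p) (snd p)) {p. 1 \<le> fst p \<and> fst p \<le> snd p}"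
    and diag_id: "\<And>i. 1 \<le> i \<Longrightarrow> distr M borel (\<xi> i i) = distr M borel (\<xi> 1 1)"
    and off_id: "\<And>i j. 1 \<le> i \<Longrightarrow> i < j \<Longrightarrow> distr M borel (\<xi> i j) = distr M borel (\<xi> 1 2)"
    and mean0: "\<And>i j. 1 \<le> i \<Longrightarrow> i \<le> j \<Longrightarrow> integral\<^sup>L M (\<xi> i j) = 0"
    and moments_diag: "\<And>p::nat. integrable M (\<lambda>x. \<bar>\<xi> 1 1 x\<bar> ^ p)"
    and moments_off: "\<And>p::nat. integrable M (\<lambda>x. \<bar>\<xi> 1 2 x\<bar> ^ p)"
    and var1: "integral\<^sup>L M (\<lambda>x. (\<xi> 1 2 x)\<^sup>2) = 1"
    and "k \<ge> 1"
  shows "(\<lambda>N. integral\<^sup>L M (\<lambda>x. (Z_var M \<xi> N k x)\<^sup>2)) \<longlonglongrightarrow> limit_sum M \<xi> k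
         \<and> (even k \<longrightarrow> limit_sum M \<xi> k = 0)"
proof -
  interpret wig M \<xi>
    apply (rule wig.intro[OF assms(1)])
    apply (rule wig_axioms.intro)
    apply (fact meas)
    apply (fact indep)
    apply (fact diag_id)
    apply (fact off_id)
    apply (fact mean0)
    apply (fact moments_diag)
    apply (fact moments_off)
    done
  show ?thesis by (rule main_lim) (use assms(10) in simp)
qed

end
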